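(* Let $J,K,L\ge 1$ be integers (with $K=0$ or $L=0$ also allowed, in which case the corresponding sums are absent), let $p,q,n_1,\dots,n_J$ be positive integers, $n=\sum_{j=1}^J n_j$, and let $\mathbf X_\cdot=[\mathbf X_1,\dots,\mathbf X_J]\in\mathbb R^{p\times n}$ and $\mathbf Y_\cdot=[\mathbf Y_1,\dots,\mathbf Y_J]\in\mathbb R^{q\times n}$ with $\mathbf X_j\in\mathbb R^{p\times n_j}$, $\mathbf Y_j\in\mathbb R^{q\times n_j}$. Let $\mathbf C_Y\in\{0,1\}^{J\times K}$ and $\mathbf C_S\in\{0,1\}^{J\times L}$, and for $k=1,\dots,K$ let $\mathbf Y_\cdot^{(k)}=[\mathbf Y_1^{(k)},\dots,\mathbf Y_J^{(k)}]$ where $\mathbf Y_j^{(k)}=\mathbf Y_j$ if $\mathbf C_Y[j,k]=1$ and $\mathbf Y_j^{(k)}=\mathbf 0_{q\times n_j}$ otherwise. For $l=1,\dots,L$ let $\mathcal S_l$ be the set of matrices $\mathbf S=[\mathbf S_1,\dots,\mathbf S_J]\in\mathbb R^{p\times n}$ (blocks $\mathbf S_j\in\mathbb R^{p\times n_j}$) with $\mathbf S_j=\mathbf 0$ whenever $\mathbf C_S[j,l]=0$. Let $\lambda_B^{(k)}>0$ and $\lambda_S^{(l)}>0$. Consider $$F(\{\mathbf B_k\},\{\mathbf S^{(l)}\})=\tfrac12\Big\|\mathbf X_\cdot-\sum_{k=1}^K\mathbf B_k\mathbf Y_\cdot^{(k)}-\sum_{l=1}^L\mathbf S^{(l)}\Big\|_F^2+\sum_{k=1}^K\lambda_B^{(k)}\|\mathbf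 B_k\|_*+\sum_{l=1}^L\lambda_S^{(l)}\|\mathbf S^{(l)}\|_*,$$ minimized over $\mathbf B_k\in\mathbb R^{p\times q}$ and $\mathbf S^{(l)}\in\mathcal S_l$, and, for integers $r_B\ge\min(p,q)$ and $r_S\ge\min(p,n)$, $$G=\tfrac12\Big\{\Big\|\mathbf X_\cdot-\sum_{k=1}^K\mathbf U_B^{(k)}\mathbf V_B^{(k)T}\mathbf Y_\cdot^{(k)}-\sum_{l=1}^L\mathbf U_S^{(l)}\mathbf V_S^{(l)T}\Big\|_F^2+\sum_{k=1}^K\lambda_B^{(k)}\big(\|\mathbf U_B^{(k)}\|_F^2+\|\mathbf V_B^{(k)}\|_F^2\big)+\sum_{l=1}^L\lambda_S^{(l)}\big(\|\mathbf U_S^{(l)}\|_F^2+\|\mathbf V_S^{(l)}\|_F^2\big)\Big\},$$ minimized over $\mathbf U_B^{(k)}\in\mathbb R^{p\times r_B}$, $\mathbf V_B^{(k)}\in\mathbb R^{q\times r_B}$, $\mathbf U_S^{(l)}\in\mathbb R^{p\times r_S}$, $\mathbf V_S^{(l)}\in\mathbb R^{n\times r_S}$ such that $\mathbf U_S^{(l)}\mathbf V_S^{(l)T}\in\mathcal S_l$. Then the two problems have the same minimal value, and the solutions coincide: $(\{\mathbf B_k\},\{\mathbf S^{(l)}\})$ minimizes $F$ if and only if there is a minimizer of $G$ with $\mathbf B_k=\mathbf U_B^{(k)}\mathbf V_B^{(k)T}$ for all $k$ and $\mathbf S^{(l)}=\mathbf U_S^{(l)}\mathbf V_S^{(l)T}$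 for all $l$.
   Context: $\|\cdot\|_*$ denotes the nuclear norm (sum of singular values) and $\|\cdot\|_F$ the Frobenius norm. The matrices $\mathbf C_Y,\mathbf C_S$ are fixed binary indicator matrices specifying on which cohorts each covariate-driven module $\mathbf B_k\mathbf Y_\cdot^{(k)}$ and each auxiliary module $\mathbf S^{(l)}$ is present. *)

theory Defs
  imports Complex_Main "Jordan_Normal_Form.Matrix"
begin

definition frob_norm :: "real mat \<Rightarrow> real" where
  "frob_norm A = sqrt (\<Sum>i<dim_row A. \<Sum>j<dim_col A. (A $$ (i,j))^2)"

definition nuclear_norm :: "real mat \<Rightarrow> real" where
  "nuclear_norm A = (THE s. \<exists>r U V (\<sigma>::nat \<Rightarrow> real).
      U \<in> carrier_mat (dim_row A) r \<and> V \<in> carrier_mat (dim_col A) r \<and>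
      transpose_mat U * U = 1\<^sub>m r \<and> transpose_mat V * V = 1\<^sub>m r \<and>
      (\<forall>i<r. \<sigma> i > 0) \<and>
      A = U * mat r r (\<lambda>(i,j). if i = j then \<sigma> i else 0) * transpose_mat V \<and>
      s = (\<Sum>i<r. \<sigma> i))"

text \<open>Cohort (block index j) of column c, for contiguous blocks of sizes nj 0, nj 1, ...\<close>
definition cohort :: "(nat \<Rightarrow> nat) \<Rightarrow> nat \<Rightarrow> nat" where
  "cohort nj c = (LEAST j. c < (\<Sum>i<Suc j. nj i))"

definition masked_Y :: "(nat \<Rightarrow> nat) \<Rightarrow> (nat \<Rightarrow> nat \<Rightarrow> bool) \<Rightarrow> real mat \<Rightarrow> nat \<Rightarrow> real mat" where
  "masked_Y nj CY Y k = mat (dim_row Y) (dim_col Y)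
     (\<lambda>(i,c). if CY (cohort nj c) k then Y $$ (i,c) else 0)"

definition Sset :: "(nat \<Rightarrow> nat) \<Rightarrow> (nat \<Rightarrow> nat \<Rightarrow> bool) \<Rightarrow> nat \<Rightarrow> nat \<Rightarrow> nat \<Rightarrow> real mat set" where
  "Sset nj CS p n l = {S \<in> carrier_mat p n.
     \<forall>i<p. \<forall>c<n. \<not> CS (cohort nj c) l \<longrightarrow> S $$ (i,c) = 0}"

definition residual :: "real mat \<Rightarrow> nat \<Rightarrow> (nat \<Rightarrow> real mat) \<Rightarrow> (nat \<Rightarrow> real mat)
    \<Rightarrow> nat \<Rightarrow> (nat \<Rightarrow> real mat) \<Rightarrow> real mat" where
  "residual X K Yk B L S = mat (dim_row X) (dim_col X)
     (\<lambda>(i,c). X $$ (i,c) - (\<Sum>k<K. (B k * Yk k) $$ (i,c)) - (\<Sum>l<L. S l $$ (i,c)))"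

definition F_obj :: "(nat \<Rightarrow> nat) \<Rightarrow> (nat \<Rightarrow> nat \<Rightarrow> bool) \<Rightarrow> real mat \<Rightarrow> real mat
    \<Rightarrow> nat \<Rightarrow> nat \<Rightarrow> (nat \<Rightarrow> real) \<Rightarrow> (nat \<Rightarrow> real)
    \<Rightarrow> (nat \<Rightarrow> real mat) \<times> (nat \<Rightarrow> real mat) \<Rightarrow> real" where
  "F_obj nj CY X Y K L lamB lamS BS =
     (case BS of (B, S) \<Rightarrow>
       1/2 * (frob_norm (residual X K (masked_Y nj CY Y) B L S))^2
       + (\<Sum>k<K. lamB k * nuclear_norm (B k))
       + (\<Sum>l<L. lamS l * nuclear_norm (S l)))"

definition F_feas :: "(nat \<Rightarrow> nat) \<Rightarrow> (nat \<Rightarrow> nat \<Rightarrow> bool) \<Rightarrow> nat \<Rightarrow> nat \<Rightarrow> nat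
    \<Rightarrow> nat \<Rightarrow> nat \<Rightarrow> ((nat \<Rightarrow> real mat) \<times> (nat \<Rightarrow> real mat)) set" where
  "F_feas nj CS p q n K L = {(B, S).
     (\<forall>k<K. B k \<in> carrier_mat p q) \<and> (\<forall>l<L. S l \<in> Sset nj CS p n l)}"

definition G_obj :: "(nat \<Rightarrow> nat) \<Rightarrow> (nat \<Rightarrow> nat \<Rightarrow> bool) \<Rightarrow> real mat \<Rightarrow> real mat
    \<Rightarrow> nat \<Rightarrow> nat \<Rightarrow> (nat \<Rightarrow> real) \<Rightarrow> (nat \<Rightarrow> real)
    \<Rightarrow> (nat \<Rightarrow> real mat) \<times> (nat \<Rightarrow> real mat) \<times> (nat \<Rightarrow> real mat) \<times> (nat \<Rightarrow> real mat)
    \<Rightarrow> real" where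
  "G_obj nj CY X Y K L lamB lamS UV =
     (case UV of (UB, VB, US, VS) \<Rightarrow>
       1/2 * ((frob_norm (residual X K (masked_Y nj CY Y) (\<lambda>k. UB k * transpose_mat (VB k))
                    L (\<lambda>l. US l * transpose_mat (VS l))))^2
         + (\<Sum>k<K. lamB k * ((frob_norm (UB k))^2 + (frob_norm (VB k))^2))
         + (\<Sum>l<L. lamS l * ((frob_norm (US l))^2 + (frob_norm (VS l))^2))))"

definition G_feas :: "(nat \<Rightarrow> nat) \<Rightarrow> (nat \<Rightarrow> nat \<Rightarrow> bool) \<Rightarrow> nat \<Rightarrow> nat \<Rightarrow> nat
    \<Rightarrow> nat \<Rightarrow> nat \<Rightarrow> nat \<Rightarrow> nat
    \<Rightarrow> ((nat \<Rightarrow> real mat) \<times> (nat \<Rightarrow> real mat) \<times> (nat \<Rightarrow> real mat) \<times> (nat \<Rightarrow> real mat)) set" where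
  "G_feas nj CS p q n rB rS K L = {(UB, VB, US, VS).
     (\<forall>k<K. UB k \<in> carrier_mat p rB \<and> VB k \<in> carrier_mat q rB) \<and>
     (\<forall>l<L. US l \<in> carrier_mat p rS \<and> VS l \<in> carrier_mat n rS \<and>
            US l * transpose_mat (VS l) \<in> Sset nj CS p n l)}"

end

theory Submission
  imports Defs "Jordan_Normal_Form.Determinant"
begin

lemma bw_1:
  fixes c :: "nat \<Rightarrow> real"
  assumes "\<forall>k. \<bar>c k\<bar> \<le> M"
  shows "\<exists>r. strict_mono r \<and> convergent (\<lambda>k. c (r k))"
proof -
  obtain r where r: "strict_mono r" "monoseq (\<lambda>n. c (r n))" using seq_monosub by blast
  have "Bseq (\<lambda>n. c (r n))" using assms by (intro BseqI'[of _ M]) auto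
  then have "convergent (\<lambda>n. c (r n))" using r Bseq_monoseq_convergent by blast
  then show ?thesis using r by blast
qed

lemma bw_finite:
  fixes c :: "nat \<Rightarrow> 'i \<Rightarrow> real"
  assumes "finite I" "\<forall>k. \<forall>i\<in>I. \<bar>c k i\<bar> \<le> M"
  shows "\<exists>r. strict_mono r \<and> (\<forall>i\<in>I. convergent (\<lambda>k. c (r k) i))"
  using assms
proof (induction I arbitrary: c rule: finite_induct)
  case empty
  then show ?case by (intro exI[of _ id]) (auto simp: strict_mono_def)
next
  case (insert i F)
  have "\<forall>k. \<forall>j\<in>F. \<bar>c k j\<bar> \<le> M" using insert.prems by auto
  then obtain r1 where r1: "strict_mono r1" "\<forall>i\<in>F. convergent (\<lambda>k. c (r1 k) i)"
    using insert.IH by blast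
  have "\<forall>k. \<bar>c (r1 k) i\<bar> \<le> M" using insert.prems by auto
  then obtain r2 where r2: "strict_mono r2" "convergent (\<lambda>k. c (r1 (r2 k)) i)" using bw_1[of "\<lambda>k. c (r1 k) i" M] by blast
  have "\<forall>j\<in>F. convergent (\<lambda>k. c (r1 (r2 k)) j)"
  proof
    fix j assume "j \<in> F"
    then obtain L where "(\<lambda>k. c (r1 k) j) \<longlonglongrightarrow> L" using r1 convergent_def by blast
    from LIMSEQ_subseq_LIMSEQ[OF this r2(1)] show "convergent (\<lambda>k. c (r1 (r2 k)) j)"
      by (auto simp: convergent_def o_def)
  qed
  then show ?case using r2 strict_mono_o[OF r1(1) r2(1)]
    by (intro exI[of _ "r1 \<circ> r2"]) (auto simp: o_def)
qed

lemma attain_min: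
  fixes f :: "'a \<Rightarrow> real" and coord :: "'a \<Rightarrow> 'i \<Rightarrow> real"
  assumes fin: "finite I" and ne: "S \<noteq> {}" and bd: "\<forall>x\<in>S. \<forall>i\<in>I. \<bar>coord x i\<bar> \<le> M"
    and cl: "\<And>xs. (\<forall>k. xs k \<in> S) \<Longrightarrow> (\<forall>i\<in>I. convergent (\<lambda>k. coord (xs k) i))
               \<Longrightarrow> \<exists>y\<in>S. (\<lambda>k. f (xs k)) \<longlonglongrightarrow> f y"
  shows "\<exists>y\<in>S. \<forall>x\<in>S. f y \<le> f x"
proof -
  have sub: "\<exists>y\<in>S. \<exists>r. strict_mono r \<and> (\<lambda>k. f (xs (r k))) \<longlonglongrightarrow> f y" if xsS: "\<forall>k. xs k \<in> S" for xs :: "nat \<Rightarrow> 'a"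
  proof -
    obtain r where r: "strict_mono r" "\<forall>i\<in>I. convergent (\<lambda>k. coord (xs (r k)) i)"
    proof -
      have "\<forall>k. \<forall>i\<in>I. \<bar>coord (xs k) i\<bar> \<le> M" using bd xsS by blast
      then show ?thesis using bw_finite[OF fin, of "\<lambda>k. coord (xs k)" M] that by blast
    qed
    from cl[of "\<lambda>k. xs (r k)"] r xsS show ?thesis by auto
  qed
  have bdd: "bdd_below (f ` S)"
  proof (rule ccontr)
    assume "\<not> bdd_below (f ` S)"
    then have "\<forall>k::nat. \<exists>x\<in>S. f x < - real k" unfolding bdd_below_def
    proof (intro allI)
      fix k :: nat
      assume nb: "\<nexists>M. Ball (f ` S) ((\<le>) M)"
      show "\<exists>x\<in>S. f x < - real k"
      proof (rule ccontr)
        assume "\<not> (\<exists>x\<in>S. f x < - real k)"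
        then have "Ball (f ` S) ((\<le>) (- real k))" by (auto simp: not_less)
        with nb show False by blast
      qed
    qed
    then obtain xs where xs: "\<forall>k. xs k \<in> S \<and> f (xs k) < - real k" by metis
    then obtain y r where yr: "strict_mono r" "(\<lambda>k. f (xs (r k))) \<longlonglongrightarrow> f y" using sub by blast
    then have "Bseq (\<lambda>k. f (xs (r k)))" using convergent_imp_Bseq convergent_def by blast
    then obtain B where B: "\<forall>k. norm (f (xs (r k))) \<le> B" using BseqE by metis
    define k where "k = nat \<lceil>B\<rceil> + 1"
    have "real (r k) \<ge> real k" using seq_suble[OF yr(1)] by simp
    moreover have "real k > B" unfolding k_def by linarith
    moreover have "f (xs (r k)) < - real (r k)" using xs by blast
    moreover have "\<bar>f (xs (r k))\<bar> \<le> B" using B by simp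
    ultimately show False by linarith
  qed
  define c where "c = Inf (f ` S)"
  have low: "\<forall>x\<in>S. c \<le> f x" unfolding c_def using bdd by (simp add: cInf_lower)
  have "\<forall>k::nat. \<exists>x\<in>S. f x < c + 1 / (real k + 1)"
  proof
    fix k :: nat
    have "c < c + 1 / (real k + 1)" by simp
    then show "\<exists>x\<in>S. f x < c + 1 / (real k + 1)" unfolding c_def
      using cInf_less_iff[of "f ` S"] ne bdd by (metis c_def image_is_empty imageE)
  qed
  then obtain xs where xs: "\<forall>k. xs k \<in> S \<and> f (xs k) < c + 1 / (real k + 1)" by metis
  then obtain y r where y: "y \<in> S" and yr: "strict_mono r" "(\<lambda>k. f (xs (r k))) \<longlonglongrightarrow> f y"
    using sub by blast
  have "f y \<le> c"
  proof (rule ccontr)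
    assume "\<not> f y \<le> c"
    then have d: "f y - c > 0" by simp
    then obtain m :: nat where m: "inverse (real (Suc m)) < f y - c" using reals_Archimedean by blast
    have "\<forall>j\<ge>m. f (xs (r j)) \<le> c + 1 / (real m + 1)"
    proof (intro allI impI)
      fix j assume "m \<le> j"
      then have "real m \<le> real (r j)" using seq_suble[OF yr(1), of j] by simp
      then have "1 / (real (r j) + 1) \<le> 1 / (real m + 1)" by (simp add: frac_le)
      then show "f (xs (r j)) \<le> c + 1 / (real m + 1)" using xs[rule_format, of "r j"] by simp
    qed
    then have "f y \<le> c + 1 / (real m + 1)" using LIMSEQ_le_const2[OF yr(2)] by blast
    with m show False by (simp add: inverse_eq_divide add.commute)
  qed
  then show ?thesis using y low by (metis antisym)
qed

definition dotp :: "nat \<Rightarrow> (nat \<Rightarrow> real) \<Rightarrow> (nat \<Rightarrow> real) \<Rightarrow> real" where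
  "dotp m x y = (\<Sum>a<m. x a * y a)"

definition orthn :: "nat \<Rightarrow> nat \<Rightarrow> (nat \<Rightarrow> nat \<Rightarrow> real) \<Rightarrow> bool" where
  "orthn m r u \<longleftrightarrow> (\<forall>i<r. \<forall>j<r. dotp m (u i) (u j) = (if i = j then 1 else 0))"

lemma dotp_comm: "dotp m x y = dotp m y x"
  unfolding dotp_def by (simp add: mult.commute)

lemma dotp_nonneg: "dotp m x x \<ge> 0"
  unfolding dotp_def by (intro sum_nonneg) auto

lemma sum_sum_swap_mult:
  fixes f :: "nat \<Rightarrow> real" and g :: "nat \<Rightarrow> nat \<Rightarrow> real" and p r :: nat
  shows "(\<Sum>a<p. f a * (\<Sum>i<r. g i a)) = (\<Sum>i<r. \<Sum>a<p. f a * g i a)"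
  unfolding sum_distrib_left by (rule sum.swap)

lemma bessel:
  assumes o: "orthn p r u"
  shows "(\<Sum>i<r. (dotp p (u i) x)^2) \<le> dotp p x x"
proof -
  define t where "t i = dotp p (u i) x" for i
  define y where "y a = (\<Sum>i<r. t i * u i a)" for a
  have e1: "(\<Sum>a<p. x a * y a) = (\<Sum>i<r. t i * t i)"
    unfolding y_def sum_sum_swap_mult
    by (intro sum.cong) (auto simp: t_def dotp_def sum_distrib_left mult.commute mult.left_commute)
  have e2: "(\<Sum>a<p. y a * y a) = (\<Sum>i<r. t i * t i)"
  proof -
    have "(\<Sum>a<p. y a * y a) = (\<Sum>i<r. \<Sum>a<p. y a * (t i * u i a))"
      unfolding y_def[of _] by (rule sum_sum_swap_mult)
    also have "\<dots> = (\<Sum>i<r. t i * (\<Sum>j<r. t j * dotp p (u j) (u i)))"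
      unfolding y_def dotp_def
      by (intro sum.cong refl)
         (simp add: sum_distrib_left sum_distrib_right sum.swap[of _ "{..<r}" "{..<p}"] mult_ac)
    also have "\<dots> = (\<Sum>i<r. t i * t i)"
    proof (rule sum.cong[OF refl])
      fix i assume i: "i \<in> {..<r}"
      have "(\<Sum>j<r. t j * dotp p (u j) (u i)) = (\<Sum>j<r. if j = i then t j else 0)"
        using o i unfolding orthn_def by (intro sum.cong) auto
      also have "\<dots> = t i" using i by simp
      finally show "t i * (\<Sum>j<r. t j * dotp p (u j) (u i)) = t i * t i" by simp
    qed
    finally show ?thesis .
  qed
  have "0 \<le> (\<Sum>a<p. (x a - y a)^2)" by (intro sum_nonneg) auto
  also have "\<dots> = (\<Sum>a<p. x a * x a) - 2 * (\<Sum>a<p. x a * y a) + (\<Sum>a<p. y a * y a)"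
    by (simp add: power2_eq_square algebra_simps sum.distrib sum_subtractf sum_distrib_left)
  finally show ?thesis unfolding e1 e2 by (simp add: t_def dotp_def power2_eq_square)
qed

lemma mult_entry:
  assumes "A \<in> carrier_mat a b" "B \<in> carrier_mat b c" "i < a" "j < c"
  shows "(A * B) $$ (i,j) = (\<Sum>l<b. A $$ (i,l) * B $$ (l,j))"
  using assms by (simp add: scalar_prod_def atLeast0LessThan)

lemma orth_le:
  assumes o: "orthn p r u"
  shows "r \<le> p"
proof (rule ccontr)
  assume "\<not> r \<le> p"
  then have rp: "p < r" by simp
  define U where "U = mat r r (\<lambda>(a,i). if a < p then u i a else (0::real))"
  have U: "U \<in> carrier_mat r r" unfolding U_def by simp
  have Ut: "transpose_mat U \<in> carrier_mat r r" using U by simp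
  have "transpose_mat U * U = 1\<^sub>m r"
  proof (rule eq_matI)
    fix i j assume i: "i < dim_row (1\<^sub>m r :: real mat)" and j: "j < dim_col (1\<^sub>m r :: real mat)"
    then have i: "i < r" and j: "j < r" by auto
    have "(transpose_mat U * U) $$ (i,j) = (\<Sum>a<r. transpose_mat U $$ (i,a) * U $$ (a,j))"
      using mult_entry[OF Ut U i j] .
    also have "\<dots> = (\<Sum>a<r. if a < p then u i a * u j a else 0)"
      using i j U by (intro sum.cong) (auto simp: U_def)
    also have "\<dots> = (\<Sum>a\<in>{x\<in>{..<r}. x < p}. u i a * u j a)"
      by (rule sum.inter_filter[symmetric]) simp
    also have "{x\<in>{..<r}. x < p} = {..<p}" using rp by auto
    also have "(\<Sum>a<p. u i a * u j a) = (if i = j then 1 else 0)"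
      using o i j unfolding orthn_def dotp_def by auto
    finally show "(transpose_mat U * U) $$ (i,j) = 1\<^sub>m r $$ (i,j)" using i j by simp
  qed (use U in auto)
  then have "det (transpose_mat U) * det U = 1"
    using det_mult[OF Ut U] by simp
  moreover have "det (transpose_mat U) = 0"
  proof -
    have "transpose_mat U *\<^sub>v unit_vec r (r - 1) = 0\<^sub>v r"
    proof (rule eq_vecI)
      fix i assume "i < dim_vec (0\<^sub>v r :: real vec)"
      then have i: "i < r" by simp
      have "(transpose_mat U *\<^sub>v unit_vec r (r - 1)) $ i = row (transpose_mat U) i \<bullet> unit_vec r (r - 1)"
        using i U by simp
      also have "\<dots> = row (transpose_mat U) i $ (r - 1)" using rp by (intro scalar_prod_right_unit) auto
      also have "\<dots> = U $$ (r - 1, i)" using i rp U by simp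
      also have "\<dots> = 0" using i rp by (simp add: U_def)
      finally show "(transpose_mat U *\<^sub>v unit_vec r (r - 1)) $ i = 0\<^sub>v r $ i" using i by simp
    qed (use U in auto)
    moreover have "unit_vec r (r - 1) \<noteq> (0\<^sub>v r :: real vec)" using rp by simp
    ultimately show ?thesis using det_0_iff_vec_prod_zero_field[OF Ut]
      by (metis unit_vec_carrier)
  qed
  ultimately show False by simp
qed

lemma align:
  fixes w u :: "nat \<Rightarrow> real"
  assumes up: "\<forall>x. dotp m x x \<le> 1 \<longrightarrow> (\<forall>a\<ge>m. x a = 0) \<longrightarrow> dotp m x w \<le> s"
    and u1: "dotp m u u \<le> 1" and uw: "dotp m u w = s" and s: "s > 0"
  shows "(\<forall>a<m. w a = s * u a) \<and> dotp m u u = 1"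
proof -
  define t where "t = dotp m w w"
  have t0: "t \<ge> 0" unfolding t_def by (rule dotp_nonneg)
  have ts: "t \<le> s^2"
  proof (cases "t = 0")
    case True then show ?thesis by simp
  next
    case False
    then have tp: "t > 0" using t0 by simp
    define x where "x a = (if a < m then w a / sqrt t else 0)" for a
    have "dotp m x x = t / (sqrt t)^2"
      unfolding dotp_def x_def t_def by (simp add: sum_divide_distrib power2_eq_square)
    also have "\<dots> = 1" using tp by simp
    finally have "dotp m x x \<le> 1" by simp
    moreover have "\<forall>a\<ge>m. x a = 0" unfolding x_def by simp
    ultimately have "dotp m x w \<le> s" using up by blast
    moreover have "dotp m x w = t / sqrt t"
      unfolding dotp_def x_def t_def by (simp add: sum_divide_distrib)
    moreover have "t / sqrt t = sqrt t" using tp by (simp add: real_div_sqrt)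
    ultimately have "sqrt t \<le> s" by simp
    then show ?thesis using t0 s by (metis real_sqrt_le_iff real_sqrt_pow2 sqrt_le_D)
  qed
  define d where "d a = w a - s * u a" for a
  have "dotp m d d = t - 2 * s * dotp m u w + s^2 * dotp m u u"
    unfolding dotp_def d_def t_def
    by (simp add: power2_eq_square algebra_simps sum.distrib sum_subtractf sum_distrib_left)
  also have "\<dots> \<le> 0"
  proof -
    have "s^2 * dotp m u u \<le> s^2" using u1 by (simp add: mult_left_le)
    then show ?thesis using ts uw by (simp add: power2_eq_square)
  qed
  finally have dd: "dotp m d d \<le> 0" .
  have w: "\<forall>a<m. w a = s * u a"
  proof (intro allI impI)
    fix a assume a: "a < m"
    have "(\<Sum>b<m. d b * d b) = 0" using dd dotp_nonneg[of m d] unfolding dotp_def by simp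
    then have "\<forall>b\<in>{..<m}. d b * d b = 0"
      by (subst sum_nonneg_eq_0_iff[symmetric]) auto
    then have "d a = 0" using a by simp
    then show "w a = s * u a" unfolding d_def by simp
  qed
  have "dotp m u w = s * dotp m u u"
    unfolding dotp_def using w by (simp add: sum_distrib_left mult_ac)
  then have "s * dotp m u u = s * 1" using uw by simp
  then show ?thesis using w s by simp
qed

lemma sq_le_dotp:
  assumes "a < m" shows "(x a)^2 \<le> dotp m x x"
proof -
  have "x a * x a \<le> (\<Sum>b<m. x b * x b)"
    using assms by (intro member_le_sum) auto
  then show ?thesis unfolding dotp_def by (simp add: power2_eq_square)
qed

lemma abs_le_dotp1:
  assumes "a < m" "dotp m x x \<le> 1" shows "\<bar>x a\<bar> \<le> 1"
proof -
  have "(x a)^2 \<le> 1" using sq_le_dotp[OF assms(1), of x] assms(2) by simp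
  then show ?thesis by (simp add: abs_square_le_1)
qed

lemma tendsto_dotp:
  assumes "\<forall>a<m. (\<lambda>k. x k a) \<longlonglongrightarrow> x0 a" "\<forall>a<m. (\<lambda>k. y k a) \<longlonglongrightarrow> y0 a"
  shows "(\<lambda>k. dotp m (x k) (y k)) \<longlonglongrightarrow> dotp m x0 y0"
  unfolding dotp_def using assms by (intro tendsto_sum tendsto_mult) auto

lemma sum_delta_r: fixes f :: "nat \<Rightarrow> real" and k m :: nat shows "k < m \<Longrightarrow> (\<Sum>b<m. f b * (if b = k then c else 0)) = f k * (c::real)"
proof -
  assume k: "k < m"
  have "(\<Sum>b<m. f b * (if b = k then c else 0)) = (\<Sum>b<m. if b = k then f k * c else 0)"
    by (intro sum.cong) auto
  also have "\<dots> = f k * c" using k by (simp add: sum.delta)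
  finally show ?thesis .
qed

lemma sum_delta_l: fixes f :: "nat \<Rightarrow> real" and k m :: nat shows "k < m \<Longrightarrow> (\<Sum>b<m. (if b = k then c else 0) * f b) = c * f k"
  using sum_delta_r[of k m f c] by (simp add: mult.commute)

definition Mv :: "nat \<Rightarrow> (nat \<Rightarrow> nat \<Rightarrow> real) \<Rightarrow> (nat \<Rightarrow> real) \<Rightarrow> nat \<Rightarrow> real" where
  "Mv n M y a = (\<Sum>b<n. M a b * y b)"

definition Mtv :: "nat \<Rightarrow> (nat \<Rightarrow> nat \<Rightarrow> real) \<Rightarrow> (nat \<Rightarrow> real) \<Rightarrow> nat \<Rightarrow> real" where
  "Mtv p M x b = (\<Sum>a<p. M a b * x a)"

lemma bil_swap: "dotp p x (Mv n M y) = dotp n (Mtv p M x) y"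
  unfolding dotp_def Mv_def Mtv_def
  by (simp add: sum_distrib_left sum_distrib_right mult_ac sum.swap[of _ "{..<p}" "{..<n}"])

lemma svd_step:
  fixes M :: "nat \<Rightarrow> nat \<Rightarrow> real"
  assumes a0: "a0 < p" and b0: "b0 < n" and M0: "M a0 b0 \<noteq> 0"
  shows "\<exists>u v s. s > 0 \<and> dotp p u u = 1 \<and> dotp n v v = 1 \<and>
     (\<forall>a<p. Mv n M v a = s * u a) \<and> (\<forall>b<n. Mtv p M u b = s * v b)"
proof -
  define S where "S = {(x,y). dotp p x x \<le> 1 \<and> dotp n y y \<le> 1 \<and> (\<forall>a\<ge>p. x a = 0) \<and> (\<forall>b\<ge>n. y b = (0::real))}"
  define f where "f z = - dotp p (fst z) (Mv n M (snd z))" for z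
  define coord where "coord z i = (if i < p then fst z i else snd z (i - p))" for z :: "(nat \<Rightarrow> real) \<times> (nat \<Rightarrow> real)" and i
  have "\<exists>y\<in>S. \<forall>x\<in>S. f y \<le> f x"
  proof (rule attain_min[where I="{..<p+n}" and coord=coord and M=1])
    have "((\<lambda>_. 0, \<lambda>_. 0)) \<in> S" unfolding S_def dotp_def by auto
    then show "S \<noteq> {}" by blast
    show "\<forall>x\<in>S. \<forall>i\<in>{..<p + n}. \<bar>coord x i\<bar> \<le> 1"
    proof (intro ballI)
      fix z i assume z: "z \<in> S" and i: "i \<in> {..<p + n}"
      show "\<bar>coord z i\<bar> \<le> 1"
      proof (cases "i < p")
        case True then show ?thesis using z unfolding S_def coord_def
          by (auto intro!: abs_le_dotp1[of i p])
      next
        case False then have "i - p < n" using i by auto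
        then show ?thesis using z False unfolding S_def coord_def
          by (auto intro!: abs_le_dotp1[of "i - p" n])
      qed
    qed
  next
    fix xs assume xs: "\<forall>k. xs k \<in> S" and cv: "\<forall>i\<in>{..<p + n}. convergent (\<lambda>k. coord (xs k) i)"
    define y1 where "y1 a = (if a < p then lim (\<lambda>k. fst (xs k) a) else 0)" for a
    define y2 where "y2 b = (if b < n then lim (\<lambda>k. snd (xs k) b) else 0)" for b
    have c1: "\<forall>a<p. (\<lambda>k. fst (xs k) a) \<longlonglongrightarrow> y1 a"
    proof (intro allI impI)
      fix a assume a: "a < p"
      then have "convergent (\<lambda>k. coord (xs k) a)" using cv by auto
      then have "convergent (\<lambda>k. fst (xs k) a)" using a unfolding coord_def by simp
      then show "(\<lambda>k. fst (xs k) a) \<longlonglongrightarrow> y1 a" using a unfolding y1_def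
        by (simp add: convergent_LIMSEQ_iff)
    qed
    have c2: "\<forall>b<n. (\<lambda>k. snd (xs k) b) \<longlonglongrightarrow> y2 b"
    proof (intro allI impI)
      fix b assume b: "b < n"
      then have "convergent (\<lambda>k. coord (xs k) (p + b))" using cv by auto
      then have "convergent (\<lambda>k. snd (xs k) b)" using b unfolding coord_def by simp
      then show "(\<lambda>k. snd (xs k) b) \<longlonglongrightarrow> y2 b" using b unfolding y2_def
        by (simp add: convergent_LIMSEQ_iff)
    qed
    have xs1: "\<forall>k. dotp p (fst (xs k)) (fst (xs k)) \<le> 1 \<and> dotp n (snd (xs k)) (snd (xs k)) \<le> 1"
    proof
      fix k
      obtain x1 x2 where "xs k = (x1, x2)" by (cases "xs k")
      then show "dotp p (fst (xs k)) (fst (xs k)) \<le> 1 \<and> dotp n (snd (xs k)) (snd (xs k)) \<le> 1"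
        using xs[rule_format, of k] unfolding S_def by auto
    qed
    have "dotp p y1 y1 \<le> 1"
      using LIMSEQ_le_const2[OF tendsto_dotp[OF c1 c1]] xs1 by blast
    moreover have "dotp n y2 y2 \<le> 1"
      using LIMSEQ_le_const2[OF tendsto_dotp[OF c2 c2]] xs1 by blast
    ultimately have yS: "(y1, y2) \<in> S" unfolding S_def y1_def y2_def by auto
    have "\<forall>a<p. (\<lambda>k. Mv n M (snd (xs k)) a) \<longlonglongrightarrow> Mv n M y2 a"
      unfolding Mv_def using c2 by (auto intro!: tendsto_sum tendsto_mult)
    then have "(\<lambda>k. f (xs k)) \<longlonglongrightarrow> f (y1, y2)"
      unfolding f_def by (auto intro!: tendsto_minus tendsto_dotp c1)
    then show "\<exists>y\<in>S. (\<lambda>k. f (xs k)) \<longlonglongrightarrow> f y" using yS by blast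
  qed simp
  then obtain u v where uvS: "(u,v) \<in> S" and mx: "\<forall>z\<in>S. f (u,v) \<le> f z" by auto
  define s where "s = dotp p u (Mv n M v)"
  have smax: "dotp p x (Mv n M y) \<le> s" if "(x,y) \<in> S" for x y
    using mx that unfolding f_def s_def by force
  have spos: "s > 0"
  proof -
    define x0 where "x0 a = (if a = a0 then sgn (M a0 b0) else 0)" for a
    define y0 where "y0 b = (if b = b0 then 1 else (0::real))" for b
    have "dotp p x0 x0 = 1" unfolding dotp_def x0_def using a0 M0
      by (simp add: if_distrib cong: if_cong)
    moreover have "dotp n y0 y0 = 1" unfolding dotp_def y0_def using b0
      by (simp add: if_distrib cong: if_cong)
    ultimately have "(x0, y0) \<in> S" unfolding S_def x0_def y0_def using a0 b0 by auto
    then have "dotp p x0 (Mv n M y0) \<le> s" by (rule smax)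
    moreover have "dotp p x0 (Mv n M y0) = sgn (M a0 b0) * M a0 b0"
      unfolding dotp_def x0_def y0_def Mv_def using a0 b0
      by (simp add: sum_delta_r sum_delta_l)
    moreover have "sgn (M a0 b0) * M a0 b0 > 0" using M0 by (simp add: sgn_if)
    ultimately show ?thesis by simp
  qed
  have u1: "dotp p u u \<le> 1" and v1: "dotp n v v \<le> 1" and u0: "\<forall>a\<ge>p. u a = 0" and v0: "\<forall>b\<ge>n. v b = 0"
    using uvS unfolding S_def by auto
  have A1: "(\<forall>a<p. Mv n M v a = s * u a) \<and> dotp p u u = 1"
  proof (rule align[OF _ u1 _ spos])
    show "\<forall>x. dotp p x x \<le> 1 \<longrightarrow> (\<forall>a\<ge>p. x a = 0) \<longrightarrow> dotp p x (Mv n M v) \<le> s"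
      using smax v1 v0 unfolding S_def by auto
  qed (simp add: s_def)
  have A2: "(\<forall>b<n. Mtv p M u b = s * v b) \<and> dotp n v v = 1"
  proof (rule align[OF _ v1 _ spos])
    show "\<forall>y. dotp n y y \<le> 1 \<longrightarrow> (\<forall>b\<ge>n. y b = 0) \<longrightarrow> dotp n y (Mtv p M u) \<le> s"
      using smax u1 u0 unfolding S_def by (auto simp: bil_swap dotp_comm)
  qed (simp add: s_def bil_swap dotp_comm)
  show ?thesis using A1 A2 spos by blast
qed

lemma orthn_extend:
  assumes "orthn m r u" "\<forall>i<r. dotp m (u i) w = 0" "dotp m w w = 1"
  shows "orthn m (Suc r) (u(r := w))"
  using assms unfolding orthn_def by (auto simp: less_Suc_eq dotp_comm)

definition Rres :: "(nat \<Rightarrow> nat \<Rightarrow> real) \<Rightarrow> nat \<Rightarrow> (nat \<Rightarrow> nat \<Rightarrow> real) \<Rightarrow> (nat \<Rightarrow> nat \<Rightarrow> real)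
   \<Rightarrow> (nat \<Rightarrow> real) \<Rightarrow> nat \<Rightarrow> nat \<Rightarrow> real" where
  "Rres A r u v \<sigma> a b = A a b - (\<Sum>i<r. \<sigma> i * u i a * v i b)"

lemma Rres_Suc:
  "Rres A (Suc r) (u(r := u')) (v(r := v')) (\<sigma>(r := s)) a b = Rres A r u v \<sigma> a b - s * u' a * v' b"
proof -
  have "(\<Sum>i<r. (\<sigma>(r := s)) i * (u(r := u')) i a * (v(r := v')) i b) = (\<Sum>i<r. \<sigma> i * u i a * v i b)"
    by (intro sum.cong) auto
  then show ?thesis unfolding Rres_def by simp
qed

lemma Mv_sub: "Mv n (\<lambda>a b. R a b - s * x a * y b) w a = Mv n R w a - s * x a * dotp n y w"
proof -
  have "(\<Sum>b<n. (R a b - s*x a*y b) * w b) = (\<Sum>b<n. R a b * w b) - (\<Sum>b<n. (s * x a) * (y b * w b))"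
    by (simp add: left_diff_distrib sum_subtractf mult.assoc)
  then show ?thesis unfolding Mv_def dotp_def by (simp add: sum_distrib_left[symmetric])
qed

lemma Mtv_sub: "Mtv p (\<lambda>a b. R a b - s * x a * y b) w b = Mtv p R w b - s * y b * dotp p x w"
proof -
  have "(\<Sum>a<p. (R a b - s*x a*y b) * w a) = (\<Sum>a<p. R a b * w a) - (\<Sum>a<p. (s * y b) * (x a * w a))"
    by (simp add: left_diff_distrib right_diff_distrib sum_subtractf mult_ac)
  then show ?thesis unfolding Mtv_def dotp_def by (simp add: sum_distrib_left[symmetric])
qed

lemma dotp_cong: "(\<forall>a<m. x a = y a) \<Longrightarrow> dotp m z x = dotp m z y"
  unfolding dotp_def by (intro sum.cong) auto

lemma svd_fun:
  fixes A :: "nat \<Rightarrow> nat \<Rightarrow> real"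
  shows "\<exists>r u v \<sigma>. orthn p r u \<and> orthn n r v \<and> (\<forall>i<r. \<sigma> i > 0) \<and>
           (\<forall>a<p. \<forall>b<n. A a b = (\<Sum>i<r. \<sigma> i * u i a * v i b))"
proof -
  have main: "\<And>r u v \<sigma>. p - r = d \<Longrightarrow> orthn p r u \<Longrightarrow> orthn n r v \<Longrightarrow> (\<forall>i<r. \<sigma> i > 0) \<Longrightarrow>
     (\<forall>i<r. \<forall>a<p. Mv n (Rres A r u v \<sigma>) (v i) a = 0) \<Longrightarrow>
     (\<forall>i<r. \<forall>b<n. Mtv p (Rres A r u v \<sigma>) (u i) b = 0) \<Longrightarrow>
     \<exists>r u v \<sigma>. orthn p r u \<and> orthn n r v \<and> (\<forall>i<r. \<sigma> i > 0) \<and>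
           (\<forall>a<p. \<forall>b<n. A a b = (\<Sum>i<r. \<sigma> i * u i a * v i b))" for d
  proof (induction d rule: less_induct)
    case (less d r u v \<sigma>)
    let ?R = "Rres A r u v \<sigma>"
    show ?case
    proof (cases "\<forall>a<p. \<forall>b<n. ?R a b = 0")
      case True
      then have "\<forall>a<p. \<forall>b<n. A a b = (\<Sum>i<r. \<sigma> i * u i a * v i b)" unfolding Rres_def by simp
      then show ?thesis using less.prems by blast
    next
      case False
      then obtain a0 b0 where a0: "a0 < p" and b0: "b0 < n" and R0: "?R a0 b0 \<noteq> 0" by blast
      obtain u' v' s where s: "s > 0" and u'1: "dotp p u' u' = 1" and v'1: "dotp n v' v' = 1"
        and Mvs: "\<forall>a<p. Mv n ?R v' a = s * u' a" and Mtvs: "\<forall>b<n. Mtv p ?R u' b = s * v' b"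
        using svd_step[of a0 p b0 n ?R, OF a0 b0 R0] by blast
      have ou: "\<forall>i<r. dotp p (u i) u' = 0"
      proof (intro allI impI)
        fix i assume i: "i < r"
        have "s * dotp p (u i) u' = dotp p (u i) (Mv n ?R v')"
          using Mvs unfolding dotp_def by (auto simp: sum_distrib_left mult_ac intro!: sum.cong)
        also have "\<dots> = dotp n (Mtv p ?R (u i)) v'" by (rule bil_swap)
        also have "\<dots> = 0" using less.prems(6) i unfolding dotp_def by auto
        finally show "dotp p (u i) u' = 0" using s by simp
      qed
      have ov: "\<forall>i<r. dotp n (v i) v' = 0"
      proof (intro allI impI)
        fix i assume i: "i < r"
        have "s * dotp n (v i) v' = dotp n (v i) (Mtv p ?R u')"
          using Mtvs unfolding dotp_def by (auto simp: sum_distrib_left mult_ac intro!: sum.cong)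
        also have "\<dots> = dotp p u' (Mv n ?R (v i))" by (simp add: bil_swap dotp_comm)
        also have "\<dots> = 0" using less.prems(5) i unfolding dotp_def by auto
        finally show "dotp n (v i) v' = 0" using s by simp
      qed
      have ou2: "orthn p (Suc r) (u(r := u'))" by (rule orthn_extend[OF less.prems(2) ou u'1])
      have ov2: "orthn n (Suc r) (v(r := v'))" by (rule orthn_extend[OF less.prems(3) ov v'1])
      have rp: "Suc r \<le> p" using orth_le[OF ou2] .
      let ?R2 = "Rres A (Suc r) (u(r := u')) (v(r := v')) (\<sigma>(r := s))"
      have R2: "?R2 = (\<lambda>a b. ?R a b - s * u' a * v' b)" by (intro ext) (rule Rres_Suc)
      have c5: "\<forall>i<Suc r. \<forall>a<p. Mv n ?R2 ((v(r := v')) i) a = 0"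
      proof (intro allI impI)
        fix i a assume i: "i < Suc r" and a: "a < p"
        show "Mv n ?R2 ((v(r := v')) i) a = 0"
        proof (cases "i = r")
          case True
          then show ?thesis unfolding R2 Mv_sub using Mvs a v'1 by simp
        next
          case False
          then have "i < r" using i by simp
          then show ?thesis unfolding R2 Mv_sub using less.prems(5) a ov False
            by (simp add: dotp_comm)
        qed
      qed
      have c6: "\<forall>i<Suc r. \<forall>b<n. Mtv p ?R2 ((u(r := u')) i) b = 0"
      proof (intro allI impI)
        fix i b assume i: "i < Suc r" and b: "b < n"
        show "Mtv p ?R2 ((u(r := u')) i) b = 0"
        proof (cases "i = r")
          case True
          then show ?thesis unfolding R2 Mtv_sub using Mtvs b u'1 by simp
        next
          case False
          then have "i < r" using i by simp
          then show ?thesis unfolding R2 Mtv_sub using less.prems(6) b ou False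
            by (simp add: dotp_comm)
        qed
      qed
      have sp: "\<forall>i<Suc r. (\<sigma>(r := s)) i > 0" using less.prems(4) s by (simp add: less_Suc_eq)
      have "p - Suc r < d" using less.prems(1) rp by simp
      from less.IH[OF this refl ou2 ov2 sp c5 c6] show ?thesis .
    qed
  qed
  have "p - 0 = p" by simp
  from main[OF this] show ?thesis by (auto simp: orthn_def)
qed

definition fro2 :: "real mat \<Rightarrow> real" where
  "fro2 A = (\<Sum>i<dim_row A. \<Sum>j<dim_col A. (A $$ (i,j))^2)"

lemma frob_sq: "(frob_norm A)^2 = fro2 A"
  unfolding frob_norm_def fro2_def by (simp add: sum_nonneg)

definition svdw :: "real mat \<Rightarrow> nat \<Rightarrow> real mat \<Rightarrow> real mat \<Rightarrow> (nat \<Rightarrow> real) \<Rightarrow> bool" where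
  "svdw A r U V \<sigma> \<longleftrightarrow> U \<in> carrier_mat (dim_row A) r \<and> V \<in> carrier_mat (dim_col A) r \<and>
      transpose_mat U * U = 1\<^sub>m r \<and> transpose_mat V * V = 1\<^sub>m r \<and>
      (\<forall>i<r. \<sigma> i > 0) \<and>
      A = U * mat r r (\<lambda>(i,j). if i = j then \<sigma> i else 0) * transpose_mat V"

lemma nuclear_norm_alt:
  "nuclear_norm A = (THE s. \<exists>r U V \<sigma>. svdw A r U V \<sigma> \<and> s = (\<Sum>i<r. \<sigma> i))"
  unfolding nuclear_norm_def svdw_def by (simp add: conj_assoc)

lemma sum3_swap:
  "(\<Sum>a\<in>A. \<Sum>b\<in>B. \<Sum>c\<in>C. f a b c) = (\<Sum>c\<in>C. \<Sum>a\<in>A. \<Sum>b\<in>B. f a b (c::nat))"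
proof -
  have "(\<Sum>a\<in>A. \<Sum>b\<in>B. \<Sum>c\<in>C. f a b c) = (\<Sum>a\<in>A. \<Sum>c\<in>C. \<Sum>b\<in>B. f a b c)"
    by (intro sum.cong refl) (rule sum.swap)
  also have "\<dots> = (\<Sum>c\<in>C. \<Sum>a\<in>A. \<Sum>b\<in>B. f a b c)" by (rule sum.swap)
  finally show ?thesis .
qed

lemma usvt_entry:
  fixes \<sigma> :: "nat \<Rightarrow> real"
  assumes U: "U \<in> carrier_mat p r" and V: "V \<in> carrier_mat n r" and a: "a < p" and b: "b < n"
  shows "(U * mat r r (\<lambda>(i,j). if i = j then \<sigma> i else 0) * transpose_mat V) $$ (a,b)
         = (\<Sum>i<r. \<sigma> i * U $$ (a,i) * V $$ (b,i))"
proof -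
  let ?D = "mat r r (\<lambda>(i,j). if i = j then \<sigma> i else (0::real))"
  have D: "?D \<in> carrier_mat r r" by simp
  have UD: "U * ?D \<in> carrier_mat p r" using U D by simp
  have Vt: "transpose_mat V \<in> carrier_mat r n" using V by simp
  have ud: "(U * ?D) $$ (a,j) = U $$ (a,j) * \<sigma> j" if j: "j < r" for j
  proof -
    have "(U * ?D) $$ (a,j) = (\<Sum>l<r. U $$ (a,l) * ?D $$ (l,j))" by (rule mult_entry[OF U D a j])
    also have "\<dots> = (\<Sum>l<r. U $$ (a,l) * (if l = j then \<sigma> j else 0))"
      using j by (intro sum.cong) auto
    also have "\<dots> = U $$ (a,j) * \<sigma> j" using j by (rule sum_delta_r)
    finally show ?thesis .
  qed
  have "(U * ?D * transpose_mat V) $$ (a,b) = (\<Sum>l<r. (U * ?D) $$ (a,l) * transpose_mat V $$ (l,b))"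
    by (rule mult_entry[OF UD Vt a b])
  also have "\<dots> = (\<Sum>i<r. \<sigma> i * U $$ (a,i) * V $$ (b,i))"
    using V b by (intro sum.cong) (auto simp: ud)
  finally show ?thesis .
qed

lemma gram_entry:
  assumes U: "U \<in> carrier_mat p r" and i: "i < r" and j: "j < r"
  shows "(transpose_mat U * U) $$ (i,j) = dotp p (\<lambda>a. U $$ (a,i)) (\<lambda>a. U $$ (a,j))"
proof -
  have Ut: "transpose_mat U \<in> carrier_mat r p" using U by simp
  show ?thesis unfolding mult_entry[OF Ut U i j] dotp_def using U i j by (intro sum.cong) auto
qed

lemma gram_orthn:
  assumes U: "U \<in> carrier_mat p r"
  shows "(transpose_mat U * U = 1\<^sub>m r) \<longleftrightarrow> orthn p r (\<lambda>i a. U $$ (a,i))"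
proof
  assume "transpose_mat U * U = 1\<^sub>m r"
  then show "orthn p r (\<lambda>i a. U $$ (a,i))"
    unfolding orthn_def using gram_entry[OF U] by (metis index_one_mat(1))
next
  assume o: "orthn p r (\<lambda>i a. U $$ (a,i))"
  show "transpose_mat U * U = 1\<^sub>m r"
  proof (rule eq_matI)
    fix i j assume "i < dim_row (1\<^sub>m r :: real mat)" "j < dim_col (1\<^sub>m r :: real mat)"
    then have i: "i < r" and j: "j < r" by auto
    show "(transpose_mat U * U) $$ (i,j) = 1\<^sub>m r $$ (i,j)"
      using gram_entry[OF U i j] o i j unfolding orthn_def by simp
  qed (use U in auto)
qed

lemma svdw_fun:
  assumes A: "A \<in> carrier_mat p n" and w: "svdw A r U V \<sigma>"
  shows "orthn p r (\<lambda>i a. U $$ (a,i)) \<and> orthn n r (\<lambda>i b. V $$ (b,i)) \<and> (\<forall>i<r. \<sigma> i > 0) \<and>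
         (\<forall>a<p. \<forall>b<n. A $$ (a,b) = (\<Sum>i<r. \<sigma> i * U $$ (a,i) * V $$ (b,i)))"
proof -
  have U: "U \<in> carrier_mat p r" and V: "V \<in> carrier_mat n r" using w A unfolding svdw_def by auto
  show ?thesis using w gram_orthn[OF U] gram_orthn[OF V] usvt_entry[OF U V] unfolding svdw_def
    by auto
qed

lemma orthn_cong:
  assumes "\<forall>i<r. \<forall>a<m. u i a = u' i a"
  shows "orthn m r u = orthn m r u'"
proof -
  have "\<forall>i<r. \<forall>j<r. dotp m (u i) (u j) = dotp m (u' i) (u' j)"
    using assms unfolding dotp_def by (auto intro!: sum.cong)
  then show ?thesis unfolding orthn_def by auto
qed

lemma svd_exists:
  assumes A: "A \<in> carrier_mat p n"
  shows "\<exists>r U V \<sigma>. svdw A r U V \<sigma> \<and> r \<le> p \<and> r \<le> n"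
proof -
  obtain r u v \<sigma> where o1: "orthn p r u" and o2: "orthn n r v" and s: "\<forall>i<r. \<sigma> i > 0"
    and e: "\<forall>a<p. \<forall>b<n. A $$ (a,b) = (\<Sum>i<r. \<sigma> i * u i a * v i b)"
    using svd_fun[of p n "\<lambda>a b. A $$ (a,b)"] by blast
  define U where "U = mat p r (\<lambda>(a,i). u i a)"
  define V where "V = mat n r (\<lambda>(b,i). v i b)"
  have U: "U \<in> carrier_mat p r" and V: "V \<in> carrier_mat n r" unfolding U_def V_def by auto
  have oU: "orthn p r (\<lambda>i a. U $$ (a,i))" using o1 orthn_cong[of r p "\<lambda>i a. U $$ (a,i)" u]
    unfolding U_def by simp
  have oV: "orthn n r (\<lambda>i a. V $$ (a,i))" using o2 orthn_cong[of r n "\<lambda>i a. V $$ (a,i)" v]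
    unfolding V_def by simp
  let ?D = "mat r r (\<lambda>(i,j). if i = j then \<sigma> i else (0::real))"
  have "A = U * ?D * transpose_mat V"
  proof (rule eq_matI)
    fix a b assume "a < dim_row (U * ?D * transpose_mat V)" "b < dim_col (U * ?D * transpose_mat V)"
    then have a: "a < p" and b: "b < n" using U V by auto
    show "A $$ (a,b) = (U * ?D * transpose_mat V) $$ (a,b)"
      unfolding usvt_entry[OF U V a b] e[rule_format, OF a b] using a b
      by (intro sum.cong) (auto simp: U_def V_def)
  qed (use A U V in auto)
  then have "svdw A r U V \<sigma>" unfolding svdw_def using A U V gram_orthn[OF U] gram_orthn[OF V] oU oV s
    by auto
  moreover have "r \<le> p" using orth_le[OF o1] .
  moreover have "r \<le> n" using orth_le[OF o2] .
  ultimately show ?thesis by blast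
qed

lemma amgm_sum:
  fixes x y :: "nat \<Rightarrow> real"
  shows "(\<Sum>c<m. x c * y c) \<le> ((\<Sum>c<m. (x c)^2) + (\<Sum>c<m. (y c)^2)) / 2"
proof -
  have "(\<Sum>c<m. x c * y c) \<le> (\<Sum>c<m. ((x c)^2 + (y c)^2) / 2)"
  proof (intro sum_mono)
    fix c
    have "0 \<le> (x c - y c)^2" by simp
    then show "x c * y c \<le> ((x c)^2 + (y c)^2) / 2" by (simp add: power2_eq_square algebra_simps)
  qed
  also have "\<dots> = ((\<Sum>c<m. (x c)^2) + (\<Sum>c<m. (y c)^2)) / 2"
    by (simp only: sum.distrib[symmetric] sum_divide_distrib)
  finally show ?thesis .
qed

lemma trace_ineq:
  fixes u v :: "nat \<Rightarrow> nat \<Rightarrow> real" and w z :: "nat \<Rightarrow> nat \<Rightarrow> real"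
  assumes ou: "orthn p r u" and ov: "orthn n r v"
    and eq: "\<forall>a<p. \<forall>b<n. (\<Sum>j<r. \<sigma> j * u j a * v j b) = (\<Sum>c<m. w a c * z b c)"
  shows "(\<Sum>i<r. \<sigma> i) \<le> ((\<Sum>a<p. \<Sum>c<m. (w a c)^2) + (\<Sum>b<n. \<Sum>c<m. (z b c)^2)) / 2"
proof -
  define T where "T i = (\<Sum>a<p. \<Sum>b<n. u i a * (\<Sum>j<r. \<sigma> j * u j a * v j b) * v i b)" for i
  define \<alpha> where "\<alpha> i c = dotp p (u i) (\<lambda>a. w a c)" for i c
  define \<beta> where "\<beta> i c = dotp n (v i) (\<lambda>b. z b c)" for i c
  have T1: "T i = \<sigma> i" if i: "i < r" for i
  proof -
    have "T i = (\<Sum>a<p. \<Sum>b<n. \<Sum>j<r. \<sigma> j * (u i a * u j a) * (v j b * v i b))"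
      unfolding T_def by (simp add: sum_distrib_left sum_distrib_right mult_ac)
    also have "\<dots> = (\<Sum>j<r. \<Sum>a<p. \<Sum>b<n. \<sigma> j * (u i a * u j a) * (v j b * v i b))"
      by (rule sum3_swap)
    also have "\<dots> = (\<Sum>j<r. \<sigma> j * dotp p (u i) (u j) * dotp n (v j) (v i))"
      unfolding dotp_def by (simp add: sum_distrib_left sum_distrib_right mult_ac)
    also have "\<dots> = (\<Sum>j<r. if j = i then \<sigma> i else 0)"
      using ou ov i unfolding orthn_def by (intro sum.cong) auto
    also have "\<dots> = \<sigma> i" using i by (simp add: sum.delta)
    finally show ?thesis .
  qed
  have T2: "T i = (\<Sum>c<m. \<alpha> i c * \<beta> i c)" for i
  proof -
    have "T i = (\<Sum>a<p. \<Sum>b<n. u i a * (\<Sum>c<m. w a c * z b c) * v i b)"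
      unfolding T_def using eq by (intro sum.cong refl) auto
    also have "\<dots> = (\<Sum>a<p. \<Sum>b<n. \<Sum>c<m. (u i a * w a c) * (v i b * z b c))"
      by (simp add: sum_distrib_left sum_distrib_right mult_ac)
    also have "\<dots> = (\<Sum>c<m. \<Sum>a<p. \<Sum>b<n. (u i a * w a c) * (v i b * z b c))"
      by (rule sum3_swap)
    also have "\<dots> = (\<Sum>c<m. \<alpha> i c * \<beta> i c)"
      unfolding \<alpha>_def \<beta>_def dotp_def sum_product by (intro sum.cong refl)
    finally show ?thesis .
  qed
  have "(\<Sum>i<r. \<sigma> i) = (\<Sum>i<r. \<Sum>c<m. \<alpha> i c * \<beta> i c)"
    using T1 T2 by (intro sum.cong) auto
  also have "\<dots> \<le> (\<Sum>i<r. ((\<Sum>c<m. (\<alpha> i c)^2) + (\<Sum>c<m. (\<beta> i c)^2)) / 2)"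
    by (intro sum_mono amgm_sum)
  also have "\<dots> = ((\<Sum>c<m. \<Sum>i<r. (\<alpha> i c)^2) + (\<Sum>c<m. \<Sum>i<r. (\<beta> i c)^2)) / 2"
    by (simp only: sum.distrib[symmetric] sum_divide_distrib[symmetric] sum.swap[of _ "{..<r}" "{..<m}"])
  also have "\<dots> \<le> ((\<Sum>c<m. \<Sum>a<p. (w a c)^2) + (\<Sum>c<m. \<Sum>b<n. (z b c)^2)) / 2"
  proof -
    have "(\<Sum>c<m. \<Sum>i<r. (\<alpha> i c)^2) \<le> (\<Sum>c<m. \<Sum>a<p. (w a c)^2)"
      unfolding \<alpha>_def by (intro sum_mono) (use bessel[OF ou] in \<open>simp add: dotp_def power2_eq_square\<close>)
    moreover have "(\<Sum>c<m. \<Sum>i<r. (\<beta> i c)^2) \<le> (\<Sum>c<m. \<Sum>b<n. (z b c)^2)"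
      unfolding \<beta>_def by (intro sum_mono) (use bessel[OF ov] in \<open>simp add: dotp_def power2_eq_square\<close>)
    ultimately show ?thesis by simp
  qed
  also have "\<dots> = ((\<Sum>a<p. \<Sum>c<m. (w a c)^2) + (\<Sum>b<n. \<Sum>c<m. (z b c)^2)) / 2"
    by (simp add: sum.swap[of _ "{..<m}" "{..<p}"] sum.swap[of _ "{..<m}" "{..<n}"])
  finally show ?thesis .
qed

lemma WZt_entry:
  assumes W: "W \<in> carrier_mat p m" and Z: "Z \<in> carrier_mat n m" and a: "a < p" and b: "b < n"
  shows "(W * transpose_mat Z) $$ (a,b) = (\<Sum>c<m. W $$ (a,c) * Z $$ (b,c))"
proof -
  have Zt: "transpose_mat Z \<in> carrier_mat m n" using Z by simp
  show ?thesis unfolding mult_entry[OF W Zt a b] using Z b by (intro sum.cong) auto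
qed

lemma fro2_carrier: "W \<in> carrier_mat p m \<Longrightarrow> fro2 W = (\<Sum>a<p. \<Sum>c<m. (W $$ (a,c))^2)"
  unfolding fro2_def by simp

lemma nuc_le_w:
  assumes A: "A \<in> carrier_mat p n" and w: "svdw A r U V \<sigma>"
    and W: "W \<in> carrier_mat p m" and Z: "Z \<in> carrier_mat n m" and AWZ: "A = W * transpose_mat Z"
  shows "(\<Sum>i<r. \<sigma> i) \<le> (fro2 W + fro2 Z) / 2"
proof -
  note f = svdw_fun[OF A w]
  have eq: "\<forall>a<p. \<forall>b<n. (\<Sum>j<r. \<sigma> j * U $$ (a,j) * V $$ (b,j)) = (\<Sum>c<m. W $$ (a,c) * Z $$ (b,c))"
    using f WZt_entry[OF W Z] AWZ by metis
  have o1: "orthn p r (\<lambda>i a. U $$ (a,i))" and o2: "orthn n r (\<lambda>i b. V $$ (b,i))" using f by auto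
  show ?thesis unfolding fro2_carrier[OF W] fro2_carrier[OF Z]
    by (rule trace_ineq[OF o1 o2 eq])
qed

lemma sum_if_less:
  fixes f :: "nat \<Rightarrow> real"
  assumes "r \<le> m" shows "(\<Sum>c<m. if c < r then f c else 0) = (\<Sum>c<r. f c)"
proof -
  have "(\<Sum>c<m. if c < r then f c else 0) = (\<Sum>c\<in>{x\<in>{..<m}. x < r}. f c)"
    by (rule sum.inter_filter[symmetric]) simp
  also have "{x\<in>{..<m}. x < r} = {..<r}" using assms by auto
  finally show ?thesis .
qed

lemma fro_fact:
  assumes o: "orthn p r u" and s: "\<forall>i<r. \<sigma> i > 0" and rm: "r \<le> m"
  shows "(\<Sum>a<p. \<Sum>c<m. (if c < r then u c a * sqrt (\<sigma> c) else 0)^2) = (\<Sum>i<r. \<sigma> i)"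
proof -
  have "(\<Sum>a<p. \<Sum>c<m. (if c < r then u c a * sqrt (\<sigma> c) else 0)^2)
      = (\<Sum>a<p. \<Sum>c<m. if c < r then \<sigma> c * (u c a * u c a) else 0)"
    using s by (intro sum.cong refl) (auto simp: power2_eq_square mult_ac)
  also have "\<dots> = (\<Sum>a<p. \<Sum>c<r. \<sigma> c * (u c a * u c a))"
    using rm by (simp add: sum_if_less)
  also have "\<dots> = (\<Sum>c<r. \<sigma> c * dotp p (u c) (u c))"
    unfolding dotp_def by (simp add: sum_distrib_left sum.swap[of _ "{..<p}" "{..<r}"])
  also have "\<dots> = (\<Sum>c<r. \<sigma> c)"
    using o unfolding orthn_def by (intro sum.cong) auto
  finally show ?thesis .
qed

lemma fact_w:
  assumes A: "A \<in> carrier_mat p n" and w: "svdw A r U V \<sigma>" and rm: "r \<le> m"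
  shows "\<exists>W Z. W \<in> carrier_mat p m \<and> Z \<in> carrier_mat n m \<and> A = W * transpose_mat Z \<and>
           (fro2 W + fro2 Z) / 2 = (\<Sum>i<r. \<sigma> i)"
proof -
  note f = svdw_fun[OF A w]
  have s: "\<forall>i<r. \<sigma> i > 0" using f by blast
  define W where "W = mat p m (\<lambda>(a,c). if c < r then U $$ (a,c) * sqrt (\<sigma> c) else 0)"
  define Z where "Z = mat n m (\<lambda>(b,c). if c < r then V $$ (b,c) * sqrt (\<sigma> c) else 0)"
  have W: "W \<in> carrier_mat p m" and Z: "Z \<in> carrier_mat n m" unfolding W_def Z_def by auto
  have "A = W * transpose_mat Z"
  proof (rule eq_matI)
    fix a b assume "a < dim_row (W * transpose_mat Z)" "b < dim_col (W * transpose_mat Z)"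
    then have a: "a < p" and b: "b < n" using W Z by auto
    have "(W * transpose_mat Z) $$ (a,b) = (\<Sum>c<m. W $$ (a,c) * Z $$ (b,c))" by (rule WZt_entry[OF W Z a b])
    also have "\<dots> = (\<Sum>c<m. if c < r then \<sigma> c * U $$ (a,c) * V $$ (b,c) else 0)"
    proof (intro sum.cong refl)
      fix c assume c: "c \<in> {..<m}"
      show "W $$ (a,c) * Z $$ (b,c) = (if c < r then \<sigma> c * U $$ (a,c) * V $$ (b,c) else 0)"
      proof (cases "c < r")
        case True
        then have "\<sigma> c > 0" using s by blast
        then have sq: "sqrt (\<sigma> c) * sqrt (\<sigma> c) = \<sigma> c" by simp
        have "W $$ (a,c) * Z $$ (b,c) = U $$ (a,c) * V $$ (b,c) * (sqrt (\<sigma> c) * sqrt (\<sigma> c))"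
          using True a b c unfolding W_def Z_def by (simp add: mult_ac)
        then show ?thesis unfolding sq using True by (simp add: mult_ac)
      qed (use a b c in \<open>simp add: W_def Z_def\<close>)
    qed
    also have "\<dots> = (\<Sum>c<r. \<sigma> c * U $$ (a,c) * V $$ (b,c))" using rm by (rule sum_if_less)
    also have "\<dots> = A $$ (a,b)" using f a b by simp
    finally show "A $$ (a,b) = (W * transpose_mat Z) $$ (a,b)" by simp
  qed (use A W Z in auto)
  moreover have "fro2 W = (\<Sum>i<r. \<sigma> i)"
  proof -
    have "fro2 W = (\<Sum>a<p. \<Sum>c<m. (if c < r then U $$ (a,c) * sqrt (\<sigma> c) else 0)^2)"
      unfolding fro2_carrier[OF W] unfolding W_def by (intro sum.cong refl) auto
    also have "\<dots> = (\<Sum>i<r. \<sigma> i)"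
      using fro_fact[of p r "\<lambda>c a. U $$ (a,c)" \<sigma> m] f rm by simp
    finally show ?thesis .
  qed
  moreover have "fro2 Z = (\<Sum>i<r. \<sigma> i)"
  proof -
    have "fro2 Z = (\<Sum>a<n. \<Sum>c<m. (if c < r then V $$ (a,c) * sqrt (\<sigma> c) else 0)^2)"
      unfolding fro2_carrier[OF Z] unfolding Z_def by (intro sum.cong refl) auto
    also have "\<dots> = (\<Sum>i<r. \<sigma> i)"
      using fro_fact[of n r "\<lambda>c a. V $$ (a,c)" \<sigma> m] f rm by simp
    finally show ?thesis .
  qed
  ultimately show ?thesis using W Z by (intro exI[of _ W] exI[of _ Z]) simp
qed

lemma nuc_eq:
  assumes A: "A \<in> carrier_mat p n" and w: "svdw A r U V \<sigma>"
  shows "nuclear_norm A = (\<Sum>i<r. \<sigma> i)"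
  unfolding nuclear_norm_alt
proof (rule the_equality)
  show "\<exists>r' U' V' \<sigma>'. svdw A r' U' V' \<sigma>' \<and> (\<Sum>i<r. \<sigma> i) = (\<Sum>i<r'. \<sigma>' i)" using w by blast
next
  fix s assume "\<exists>r' U' V' \<sigma>'. svdw A r' U' V' \<sigma>' \<and> s = (\<Sum>i<r'. \<sigma>' i)"
  then obtain r' U' V' \<sigma>' where w': "svdw A r' U' V' \<sigma>'" and s: "s = (\<Sum>i<r'. \<sigma>' i)" by blast
  obtain W Z where W: "W \<in> carrier_mat p r" and Z: "Z \<in> carrier_mat n r" and e: "A = W * transpose_mat Z"
     and v: "(fro2 W + fro2 Z) / 2 = (\<Sum>i<r. \<sigma> i)" using fact_w[OF A w le_refl] by blast
  obtain W' Z' where W': "W' \<in> carrier_mat p r'" and Z': "Z' \<in> carrier_mat n r'" and e': "A = W' * transpose_mat Z'"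
     and v': "(fro2 W' + fro2 Z') / 2 = (\<Sum>i<r'. \<sigma>' i)" using fact_w[OF A w' le_refl] by blast
  have "(\<Sum>i<r'. \<sigma>' i) \<le> (\<Sum>i<r. \<sigma> i)" using nuc_le_w[OF A w' W Z e] v by simp
  moreover have "(\<Sum>i<r. \<sigma> i) \<le> (\<Sum>i<r'. \<sigma>' i)" using nuc_le_w[OF A w W' Z' e'] v' by simp
  ultimately show "s = (\<Sum>i<r. \<sigma> i)" using s by simp
qed

lemma NN_le:
  assumes A: "A \<in> carrier_mat p n" and W: "W \<in> carrier_mat p m" and Z: "Z \<in> carrier_mat n m"
    and e: "A = W * transpose_mat Z"
  shows "nuclear_norm A \<le> (fro2 W + fro2 Z) / 2"
proof -
  obtain r U V \<sigma> where w: "svdw A r U V \<sigma>" using svd_exists[OF A] by blast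
  show ?thesis unfolding nuc_eq[OF A w] using nuc_le_w[OF A w W Z e] .
qed

lemma NN_fact:
  assumes A: "A \<in> carrier_mat p n" and m: "min p n \<le> m"
  shows "\<exists>W Z. W \<in> carrier_mat p m \<and> Z \<in> carrier_mat n m \<and> A = W * transpose_mat Z \<and>
           (fro2 W + fro2 Z) / 2 = nuclear_norm A"
proof -
  obtain r U V \<sigma> where w: "svdw A r U V \<sigma>" and r: "r \<le> p" "r \<le> n" using svd_exists[OF A] by blast
  have "r \<le> m" using r m by simp
  from fact_w[OF A w this] show ?thesis unfolding nuc_eq[OF A w] .
qed

definition mconv :: "(nat \<Rightarrow> real mat) \<Rightarrow> real mat \<Rightarrow> nat \<Rightarrow> nat \<Rightarrow> bool" where
  "mconv As A a b \<longleftrightarrow> A \<in> carrier_mat a b \<and> (\<forall>m. As m \<in> carrier_mat a b) \<and>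
     (\<forall>i<a. \<forall>j<b. (\<lambda>m. As m $$ (i,j)) \<longlonglongrightarrow> A $$ (i,j))"

lemma mconv_const: "A \<in> carrier_mat a b \<Longrightarrow> mconv (\<lambda>m. A) A a b"
  unfolding mconv_def by auto

lemma mconv_mult:
  assumes "mconv As A a b" "mconv Bs B b c"
  shows "mconv (\<lambda>m. As m * Bs m) (A * B) a c"
  unfolding mconv_def
proof (intro conjI allI impI)
  show "A * B \<in> carrier_mat a c" using assms unfolding mconv_def by (meson mult_carrier_mat)
  fix m show "As m * Bs m \<in> carrier_mat a c" using assms unfolding mconv_def by (meson mult_carrier_mat)
next
  fix i j assume i: "i < a" and j: "j < c"
  have A: "A \<in> carrier_mat a b" and B: "B \<in> carrier_mat b c"
    and As: "\<And>m. As m \<in> carrier_mat a b" and Bs: "\<And>m. Bs m \<in> carrier_mat b c"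
    using assms unfolding mconv_def by auto
  have "(\<lambda>m. \<Sum>l<b. As m $$ (i,l) * Bs m $$ (l,j)) \<longlonglongrightarrow> (\<Sum>l<b. A $$ (i,l) * B $$ (l,j))"
    using assms i j unfolding mconv_def by (intro tendsto_sum tendsto_mult) auto
  then show "(\<lambda>m. (As m * Bs m) $$ (i,j)) \<longlonglongrightarrow> (A * B) $$ (i,j)"
    using mult_entry[OF As Bs i j] mult_entry[OF A B i j] by simp
qed

lemma mconv_transpose:
  assumes "mconv As A a b"
  shows "mconv (\<lambda>m. transpose_mat (As m)) (transpose_mat A) b a"
  unfolding mconv_def
proof (intro conjI allI impI)
  have A: "A \<in> carrier_mat a b" and As: "\<And>m. As m \<in> carrier_mat a b" using assms unfolding mconv_def by auto
  show "transpose_mat A \<in> carrier_mat b a" using A by simp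
  fix m show "transpose_mat (As m) \<in> carrier_mat b a" using As by simp
next
  fix i j assume i: "i < b" and j: "j < a"
  have A: "A \<in> carrier_mat a b" and As: "\<And>m. As m \<in> carrier_mat a b" using assms unfolding mconv_def by auto
  have "(\<lambda>m. As m $$ (j,i)) \<longlonglongrightarrow> A $$ (j,i)" using assms i j unfolding mconv_def by auto
  moreover have "transpose_mat (As m) $$ (i,j) = As m $$ (j,i)" for m using As[of m] i j by simp
  moreover have "transpose_mat A $$ (i,j) = A $$ (j,i)" using A i j by simp
  ultimately show "(\<lambda>m. transpose_mat (As m) $$ (i,j)) \<longlonglongrightarrow> transpose_mat A $$ (i,j)" by simp
qed

lemma mconv_fro2:
  assumes "mconv As A a b"
  shows "(\<lambda>m. fro2 (As m)) \<longlonglongrightarrow> fro2 A"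
proof -
  have A: "A \<in> carrier_mat a b" and As: "\<And>m. As m \<in> carrier_mat a b" using assms unfolding mconv_def by auto
  have "(\<lambda>m. \<Sum>i<a. \<Sum>j<b. (As m $$ (i,j))^2) \<longlonglongrightarrow> (\<Sum>i<a. \<Sum>j<b. (A $$ (i,j))^2)"
    using assms unfolding mconv_def by (intro tendsto_sum tendsto_power) auto
  then show ?thesis unfolding fro2_carrier[OF A] fro2_carrier[OF As] .
qed

lemma residual_carrier: "X \<in> carrier_mat p n \<Longrightarrow> residual X K Yk B L S \<in> carrier_mat p n"
  unfolding residual_def by auto

lemma residual_entry: "X \<in> carrier_mat p n \<Longrightarrow> i < p \<Longrightarrow> c < n \<Longrightarrow>
   residual X K Yk B L S $$ (i,c) = X $$ (i,c) - (\<Sum>k<K. (B k * Yk k) $$ (i,c)) - (\<Sum>l<L. S l $$ (i,c))"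
  unfolding residual_def by auto

lemma mconv_residual:
  assumes X: "X \<in> carrier_mat p n"
    and B: "\<forall>k<K. mconv (\<lambda>m. Bs m k * Yk k) (B k * Yk k) p n"
    and S: "\<forall>l<L. mconv (\<lambda>m. Ss m l) (S l) p n"
  shows "mconv (\<lambda>m. residual X K Yk (Bs m) L (Ss m)) (residual X K Yk B L S) p n"
  unfolding mconv_def
proof (intro conjI allI impI)
  show "residual X K Yk B L S \<in> carrier_mat p n" using X by (rule residual_carrier)
  fix m show "residual X K Yk (Bs m) L (Ss m) \<in> carrier_mat p n" using X by (rule residual_carrier)
next
  fix i j assume i: "i < p" and j: "j < n"
  have "(\<lambda>m. X $$ (i,j) - (\<Sum>k<K. (Bs m k * Yk k) $$ (i,j)) - (\<Sum>l<L. Ss m l $$ (i,j)))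
      \<longlonglongrightarrow> X $$ (i,j) - (\<Sum>k<K. (B k * Yk k) $$ (i,j)) - (\<Sum>l<L. S l $$ (i,j))"
    using B S i j unfolding mconv_def by (intro tendsto_diff tendsto_sum tendsto_const) auto
  then show "(\<lambda>m. residual X K Yk (Bs m) L (Ss m) $$ (i,j)) \<longlonglongrightarrow> residual X K Yk B L S $$ (i,j)"
    using residual_entry[OF X i j] by simp
qed

lemma masked_Y_carrier: "Y \<in> carrier_mat q n \<Longrightarrow> masked_Y nj CY Y k \<in> carrier_mat q n"
  unfolding masked_Y_def by auto

definition gUB :: "(nat \<Rightarrow> real mat) \<times> (nat \<Rightarrow> real mat) \<times> (nat \<Rightarrow> real mat) \<times> (nat \<Rightarrow> real mat) \<Rightarrow> nat \<Rightarrow> real mat"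
  where "gUB z = fst z"
definition gVB :: "(nat \<Rightarrow> real mat) \<times> (nat \<Rightarrow> real mat) \<times> (nat \<Rightarrow> real mat) \<times> (nat \<Rightarrow> real mat) \<Rightarrow> nat \<Rightarrow> real mat"
  where "gVB z = fst (snd z)"
definition gUS :: "(nat \<Rightarrow> real mat) \<times> (nat \<Rightarrow> real mat) \<times> (nat \<Rightarrow> real mat) \<times> (nat \<Rightarrow> real mat) \<Rightarrow> nat \<Rightarrow> real mat"
  where "gUS z = fst (snd (snd z))"
definition gVS :: "(nat \<Rightarrow> real mat) \<times> (nat \<Rightarrow> real mat) \<times> (nat \<Rightarrow> real mat) \<times> (nat \<Rightarrow> real mat) \<Rightarrow> nat \<Rightarrow> real mat"
  where "gVS z = snd (snd (snd z))"

lemma G_obj_alt: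
  "G_obj nj CY X Y K L lamB lamS z =
     1/2 * (fro2 (residual X K (masked_Y nj CY Y) (\<lambda>k. gUB z k * transpose_mat (gVB z k))
                    L (\<lambda>l. gUS z l * transpose_mat (gVS z l)))
         + (\<Sum>k<K. lamB k * (fro2 (gUB z k) + fro2 (gVB z k)))
         + (\<Sum>l<L. lamS l * (fro2 (gUS z l) + fro2 (gVS z l))))"
  by (cases z) (simp add: G_obj_def frob_sq gUB_def gVB_def gUS_def gVS_def)

lemma G_feas_alt:
  "z \<in> G_feas nj CS p q n rB rS K L \<longleftrightarrow>
     (\<forall>k<K. gUB z k \<in> carrier_mat p rB \<and> gVB z k \<in> carrier_mat q rB) \<and>
     (\<forall>l<L. gUS z l \<in> carrier_mat p rS \<and> gVS z l \<in> carrier_mat n rS \<and>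
            gUS z l * transpose_mat (gVS z l) \<in> Sset nj CS p n l)"
  by (cases z) (simp add: G_feas_def gUB_def gVB_def gUS_def gVS_def)

lemma fro2_nonneg: "fro2 A \<ge> 0"
  unfolding fro2_def by (intro sum_nonneg) auto

lemma G_nonneg:
  assumes "\<forall>k<K. lamB k > 0" "\<forall>l<L. lamS l > 0"
  shows "G_obj nj CY X Y K L lamB lamS z \<ge> 0"
  unfolding G_obj_alt using assms
  by (intro mult_nonneg_nonneg add_nonneg_nonneg sum_nonneg fro2_nonneg) (auto intro!: less_imp_le)

lemma G_term_bounds:
  assumes lB: "\<forall>k<K. lamB k > 0" and lS: "\<forall>l<L. lamS l > 0"
    and le: "G_obj nj CY X Y K L lamB lamS z \<le> G0"
  shows "\<forall>k<K. lamB k * fro2 (gUB z k) \<le> 2 * G0 \<and> lamB k * fro2 (gVB z k) \<le> 2 * G0"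
    and "\<forall>l<L. lamS l * fro2 (gUS z l) \<le> 2 * G0 \<and> lamS l * fro2 (gVS z l) \<le> 2 * G0"
proof -
  define R where "R = fro2 (residual X K (masked_Y nj CY Y) (\<lambda>k. gUB z k * transpose_mat (gVB z k))
                    L (\<lambda>l. gUS z l * transpose_mat (gVS z l)))"
  define SB where "SB = (\<Sum>k<K. lamB k * (fro2 (gUB z k) + fro2 (gVB z k)))"
  define SS where "SS = (\<Sum>l<L. lamS l * (fro2 (gUS z l) + fro2 (gVS z l)))"
  have R0: "R \<ge> 0" unfolding R_def by (rule fro2_nonneg)
  have lB0: "\<forall>k<K. lamB k \<ge> 0" using lB by (auto intro: less_imp_le)
  have lS0: "\<forall>l<L. lamS l \<ge> 0" using lS by (auto intro: less_imp_le)
  have SB0: "SB \<ge> 0" unfolding SB_def using lB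
    by (intro sum_nonneg mult_nonneg_nonneg add_nonneg_nonneg fro2_nonneg) (auto intro: less_imp_le)
  have SS0: "SS \<ge> 0" unfolding SS_def using lS
    by (intro sum_nonneg mult_nonneg_nonneg add_nonneg_nonneg fro2_nonneg) (auto intro: less_imp_le)
  have tot: "R + SB + SS \<le> 2 * G0" using le unfolding G_obj_alt R_def SB_def SS_def by simp
  show "\<forall>k<K. lamB k * fro2 (gUB z k) \<le> 2 * G0 \<and> lamB k * fro2 (gVB z k) \<le> 2 * G0"
  proof (intro allI impI)
    fix k assume k: "k < K"
    have "lamB k * (fro2 (gUB z k) + fro2 (gVB z k)) \<le> SB" unfolding SB_def using k lB
      by (intro member_le_sum[of k "{..<K}" "\<lambda>k. lamB k * (fro2 (gUB z k) + fro2 (gVB z k))"])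
         (use lB0 in \<open>auto intro!: mult_nonneg_nonneg add_nonneg_nonneg fro2_nonneg\<close>)
    moreover have "lamB k * fro2 (gUB z k) \<ge> 0" "lamB k * fro2 (gVB z k) \<ge> 0"
      using lB0 k fro2_nonneg by (auto intro!: mult_nonneg_nonneg)
    ultimately show "lamB k * fro2 (gUB z k) \<le> 2 * G0 \<and> lamB k * fro2 (gVB z k) \<le> 2 * G0"
      using tot R0 SS0 by (simp add: distrib_left)
  qed
  show "\<forall>l<L. lamS l * fro2 (gUS z l) \<le> 2 * G0 \<and> lamS l * fro2 (gVS z l) \<le> 2 * G0"
  proof (intro allI impI)
    fix l assume l: "l < L"
    have "lamS l * (fro2 (gUS z l) + fro2 (gVS z l)) \<le> SS" unfolding SS_def using l lS
      by (intro member_le_sum[of l "{..<L}" "\<lambda>l. lamS l * (fro2 (gUS z l) + fro2 (gVS z l))"])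
         (use lS0 in \<open>auto intro!: mult_nonneg_nonneg add_nonneg_nonneg fro2_nonneg\<close>)
    moreover have "lamS l * fro2 (gUS z l) \<ge> 0" "lamS l * fro2 (gVS z l) \<ge> 0"
      using lS0 l fro2_nonneg by (auto intro!: mult_nonneg_nonneg)
    ultimately show "lamS l * fro2 (gUS z l) \<le> 2 * G0 \<and> lamS l * fro2 (gVS z l) \<le> 2 * G0"
      using tot R0 SB0 by (simp add: distrib_left)
  qed
qed

definition ent :: "real mat \<Rightarrow> nat \<Rightarrow> nat \<Rightarrow> real" where
  "ent A i j = (if i < dim_row A \<and> j < dim_col A then A $$ (i,j) else 0)"

lemma abs_le_1_sq: "\<bar>x::real\<bar> \<le> 1 + x^2"
proof -
  have "0 \<le> (\<bar>x\<bar> - 1/2)^2" by simp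
  then have "0 \<le> \<bar>x\<bar> * \<bar>x\<bar> - \<bar>x\<bar> + 1/4" by (simp add: power2_eq_square algebra_simps)
  then show ?thesis by (simp add: power2_eq_square abs_mult_self_eq)
qed

lemma ent_bound:
  assumes c: "c > 0" and f: "c * fro2 A \<le> T" and T: "T \<ge> 0"
  shows "\<bar>ent A i j\<bar> \<le> 1 + T / c"
proof (cases "i < dim_row A \<and> j < dim_col A")
  case True
  have "(A $$ (i,j))^2 \<le> fro2 A"
  proof -
    have "(A $$ (i,j))^2 \<le> (\<Sum>j'<dim_col A. (A $$ (i,j'))^2)"
      using True by (intro member_le_sum[of j "{..<dim_col A}" "\<lambda>j'. (A $$ (i,j'))^2"]) auto
    also have "\<dots> \<le> fro2 A" unfolding fro2_def using True
      by (intro member_le_sum[of i "{..<dim_row A}" "\<lambda>i. \<Sum>j'<dim_col A. (A $$ (i,j'))^2"])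
         (auto intro!: sum_nonneg)
    finally show ?thesis .
  qed
  also have "fro2 A \<le> T / c" using c f by (simp add: field_simps)
  finally have sq: "(A $$ (i,j))^2 \<le> T / c" .
  have "\<bar>A $$ (i,j)\<bar> \<le> 1 + (A $$ (i,j))^2" by (rule abs_le_1_sq)
  then show ?thesis using sq True unfolding ent_def by simp
next
  case False
  then have "ent A i j = 0" unfolding ent_def by auto
  then show ?thesis using T c by simp
qed

lemma zero_Sset: "0\<^sub>m p n \<in> Sset nj CS p n l"
  unfolding Sset_def by simp

lemma zero_prod_Sset: "0\<^sub>m p r * transpose_mat (0\<^sub>m n r) \<in> Sset nj CS p n l"
proof -
  have "0\<^sub>m p r * transpose_mat (0\<^sub>m n r) = (0\<^sub>m p n :: real mat)"
    by (intro eq_matI) (auto simp: scalar_prod_def)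
  then show ?thesis unfolding Sset_def by simp
qed

lemma Sset_limit:
  assumes As: "\<forall>m. As m \<in> Sset nj CS p n l" and c: "mconv As A p n"
  shows "A \<in> Sset nj CS p n l"
  unfolding Sset_def
proof (intro CollectI conjI allI impI)
  show "A \<in> carrier_mat p n" using c unfolding mconv_def by blast
  fix i j assume i: "i < p" and j: "j < n" and nc: "\<not> CS (cohort nj j) l"
  have z: "As m $$ (i,j) = 0" for m using As i j nc unfolding Sset_def by blast
  have "(\<lambda>m. As m $$ (i,j)) \<longlonglongrightarrow> A $$ (i,j)" using c i j unfolding mconv_def by blast
  then have "(\<lambda>m. 0) \<longlonglongrightarrow> A $$ (i,j)" unfolding z .
  then show "A $$ (i,j) = 0" using LIMSEQ_unique[OF tendsto_const] by metis
qed

lemma G_min_exists: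
  fixes X Y :: "real mat"
  assumes lB: "\<forall>k<K. lamB k > 0" and lS: "\<forall>l<L. lamS l > 0"
    and X: "X \<in> carrier_mat p n" and Y: "Y \<in> carrier_mat q n"
  shows "\<exists>z\<in>G_feas nj CS p q n rB rS K L. \<forall>z'\<in>G_feas nj CS p q n rB rS K L.
            G_obj nj CY X Y K L lamB lamS z \<le> G_obj nj CY X Y K L lamB lamS z'"
proof -
  let ?GF = "G_feas nj CS p q n rB rS K L"
  let ?Go = "G_obj nj CY X Y K L lamB lamS"
  define z0 :: "(nat \<Rightarrow> real mat) \<times> (nat \<Rightarrow> real mat) \<times> (nat \<Rightarrow> real mat) \<times> (nat \<Rightarrow> real mat)"
    where "z0 = ((\<lambda>_. 0\<^sub>m p rB), (\<lambda>_. 0\<^sub>m q rB), (\<lambda>_. 0\<^sub>m p rS), (\<lambda>_. (0\<^sub>m n rS :: real mat)))"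
  have z0: "z0 \<in> ?GF" unfolding G_feas_alt z0_def gUB_def gVB_def gUS_def gVS_def
    by (auto intro: zero_prod_Sset zero_Sset)
  define G0 where "G0 = ?Go z0"
  have G00: "G0 \<ge> 0" unfolding G0_def by (rule G_nonneg[OF lB lS])
  define S where "S = {z \<in> ?GF. ?Go z \<le> G0}"
  define M where "M = 1 + (\<Sum>k<K. 2 * G0 / lamB k) + (\<Sum>l<L. 2 * G0 / lamS l)"
  define N where "N = p + q + n + rB + rS"
  define coord where "coord z = (\<lambda>(t::nat, k::nat, i::nat, j::nat).
     if t = 0 then (if k < K then ent (gUB z k) i j else 0)
     else if t = 1 then (if k < K then ent (gVB z k) i j else 0)
     else if t = 2 then (if k < L then ent (gUS z k) i j else 0)
     else (if k < L then ent (gVS z k) i j else 0))" for z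
  have MB: "1 + 2 * G0 / lamB k \<le> M" if "k < K" for k
  proof -
    have "2 * G0 / lamB k \<le> (\<Sum>k<K. 2 * G0 / lamB k)"
      using that lB G00 by (intro member_le_sum[of k "{..<K}" "\<lambda>k. 2 * G0 / lamB k"]) (auto intro!: divide_nonneg_pos)
    moreover have "(\<Sum>l<L. 2 * G0 / lamS l) \<ge> 0" using lS G00 by (intro sum_nonneg) (auto intro!: divide_nonneg_pos)
    ultimately show ?thesis unfolding M_def by simp
  qed
  have MS: "1 + 2 * G0 / lamS l \<le> M" if "l < L" for l
  proof -
    have "2 * G0 / lamS l \<le> (\<Sum>l<L. 2 * G0 / lamS l)"
      using that lS G00 by (intro member_le_sum[of l "{..<L}" "\<lambda>l. 2 * G0 / lamS l"]) (auto intro!: divide_nonneg_pos)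
    moreover have "(\<Sum>k<K. 2 * G0 / lamB k) \<ge> 0" using lB G00 by (intro sum_nonneg) (auto intro!: divide_nonneg_pos)
    ultimately show ?thesis unfolding M_def by simp
  qed
  have M1: "M \<ge> 1"
  proof -
    have "(\<Sum>l<L. 2 * G0 / lamS l) \<ge> 0" using lS G00 by (intro sum_nonneg) (auto intro!: divide_nonneg_pos)
    moreover have "(\<Sum>k<K. 2 * G0 / lamB k) \<ge> 0" using lB G00 by (intro sum_nonneg) (auto intro!: divide_nonneg_pos)
    ultimately show ?thesis unfolding M_def by simp
  qed
  have "\<exists>y\<in>S. \<forall>x\<in>S. ?Go y \<le> ?Go x"
  proof (rule attain_min[where I = "{..<4} \<times> {..<K+L} \<times> {..<N} \<times> {..<N}" and coord = coord and M = M])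
    show "finite ({..<4::nat} \<times> {..<K+L} \<times> {..<N} \<times> {..<N})" by simp
    have "z0 \<in> S" unfolding S_def G0_def using z0 by (simp only: mem_Collect_eq order_refl simp_thms)
    then show "S \<noteq> {}" by blast
    show "\<forall>x\<in>S. \<forall>i\<in>{..<4} \<times> {..<K+L} \<times> {..<N} \<times> {..<N}. \<bar>coord x i\<bar> \<le> M"
    proof (intro ballI)
      fix z idx assume z: "z \<in> S" and idx: "idx \<in> {..<4::nat} \<times> {..<K+L} \<times> {..<N} \<times> {..<N}"
      obtain t k i j where idx_eq: "idx = (t,k,i,j)" by (cases idx) auto
      have le: "?Go z \<le> G0" using z unfolding S_def by simp
      note tb = G_term_bounds[OF lB lS le]
      have bB: "\<bar>ent (gUB z k) i j\<bar> \<le> M \<and> \<bar>ent (gVB z k) i j\<bar> \<le> M" if "k < K"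
        using ent_bound[of "lamB k" "gUB z k" "2 * G0" i j] ent_bound[of "lamB k" "gVB z k" "2 * G0" i j]
          tb(1) that lB G00 MB[OF that] by auto
      have bS: "\<bar>ent (gUS z k) i j\<bar> \<le> M \<and> \<bar>ent (gVS z k) i j\<bar> \<le> M" if "k < L"
        using ent_bound[of "lamS k" "gUS z k" "2 * G0" i j] ent_bound[of "lamS k" "gVS z k" "2 * G0" i j]
          tb(2) that lS G00 MS[OF that] by auto
      show "\<bar>coord z idx\<bar> \<le> M" unfolding idx_eq coord_def using bB bS M1 by auto
    qed
  next
    fix xs assume xsS: "\<forall>m. xs m \<in> S"
      and cv: "\<forall>i\<in>{..<4} \<times> {..<K+L} \<times> {..<N} \<times> {..<N}. convergent (\<lambda>m. coord (xs m) i)"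
    have xsG: "\<And>m. xs m \<in> ?GF" using xsS unfolding S_def by blast
    have xsle: "\<And>m. ?Go (xs m) \<le> G0" using xsS unfolding S_def by blast
    define lm where "lm t k i j = lim (\<lambda>m. coord (xs m) (t,k,i,j))" for t k i j
    have lmc: "(\<lambda>m. coord (xs m) (t,k,i,j)) \<longlonglongrightarrow> lm t k i j"
      if "t < 4" "k < K + L" "i < N" "j < N" for t k i j
      using cv that unfolding lm_def by (simp add: convergent_LIMSEQ_iff)
    define yUB where "yUB k = mat p rB (\<lambda>(i,j). lm 0 k i j)" for k
    define yVB where "yVB k = mat q rB (\<lambda>(i,j). lm 1 k i j)" for k
    define yUS where "yUS k = mat p rS (\<lambda>(i,j). lm 2 k i j)" for k
    define yVS where "yVS k = mat n rS (\<lambda>(i,j). lm 3 k i j)" for k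
    define y where "y = (yUB, yVB, yUS, yVS)"
    have gy: "gUB y = yUB" "gVB y = yVB" "gUS y = yUS" "gVS y = yVS"
      unfolding y_def gUB_def gVB_def gUS_def gVS_def by auto
    have cUB: "mconv (\<lambda>m. gUB (xs m) k) (yUB k) p rB" if k: "k < K" for k
      unfolding mconv_def
    proof (intro conjI allI impI)
      show "yUB k \<in> carrier_mat p rB" unfolding yUB_def by simp
      fix m show "gUB (xs m) k \<in> carrier_mat p rB" using xsG[of m] k unfolding G_feas_alt by auto
    next
      fix i j assume i: "i < p" and j: "j < rB"
      have "(\<lambda>m. coord (xs m) (0,k,i,j)) \<longlonglongrightarrow> lm 0 k i j" using k i j by (intro lmc) (auto simp: N_def)
      moreover have "coord (xs m) (0,k,i,j) = gUB (xs m) k $$ (i,j)" for m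
      proof -
        have "gUB (xs m) k \<in> carrier_mat (dim_row (gUB (xs m) k)) (dim_col (gUB (xs m) k))" by auto
        have "dim_row (gUB (xs m) k) > i \<and> dim_col (gUB (xs m) k) > j" using xsG[of m] k i j unfolding G_feas_alt by auto
        then show ?thesis unfolding coord_def ent_def using k by simp
      qed
      ultimately show "(\<lambda>m. gUB (xs m) k $$ (i,j)) \<longlonglongrightarrow> yUB k $$ (i,j)" using i j unfolding yUB_def by simp
    qed
    have cVB: "mconv (\<lambda>m. gVB (xs m) k) (yVB k) q rB" if k: "k < K" for k
      unfolding mconv_def
    proof (intro conjI allI impI)
      show "yVB k \<in> carrier_mat q rB" unfolding yVB_def by simp
      fix m show "gVB (xs m) k \<in> carrier_mat q rB" using xsG[of m] k unfolding G_feas_alt by auto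
    next
      fix i j assume i: "i < q" and j: "j < rB"
      have "(\<lambda>m. coord (xs m) (1,k,i,j)) \<longlonglongrightarrow> lm 1 k i j" using k i j by (intro lmc) (auto simp: N_def)
      moreover have "coord (xs m) (1,k,i,j) = gVB (xs m) k $$ (i,j)" for m
      proof -
        have "gVB (xs m) k \<in> carrier_mat (dim_row (gVB (xs m) k)) (dim_col (gVB (xs m) k))" by auto
        have "dim_row (gVB (xs m) k) > i \<and> dim_col (gVB (xs m) k) > j" using xsG[of m] k i j unfolding G_feas_alt by auto
        then show ?thesis unfolding coord_def ent_def using k by simp
      qed
      ultimately show "(\<lambda>m. gVB (xs m) k $$ (i,j)) \<longlonglongrightarrow> yVB k $$ (i,j)" using i j unfolding yVB_def by simp
    qed
    have cUS: "mconv (\<lambda>m. gUS (xs m) k) (yUS k) p rS" if k: "k < L" for k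
      unfolding mconv_def
    proof (intro conjI allI impI)
      show "yUS k \<in> carrier_mat p rS" unfolding yUS_def by simp
      fix m show "gUS (xs m) k \<in> carrier_mat p rS" using xsG[of m] k unfolding G_feas_alt by auto
    next
      fix i j assume i: "i < p" and j: "j < rS"
      have "(\<lambda>m. coord (xs m) (2,k,i,j)) \<longlonglongrightarrow> lm 2 k i j" using k i j by (intro lmc) (auto simp: N_def)
      moreover have "coord (xs m) (2,k,i,j) = gUS (xs m) k $$ (i,j)" for m
      proof -
        have "gUS (xs m) k \<in> carrier_mat (dim_row (gUS (xs m) k)) (dim_col (gUS (xs m) k))" by auto
        have "dim_row (gUS (xs m) k) > i \<and> dim_col (gUS (xs m) k) > j" using xsG[of m] k i j unfolding G_feas_alt by auto
        then show ?thesis unfolding coord_def ent_def using k by simp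
      qed
      ultimately show "(\<lambda>m. gUS (xs m) k $$ (i,j)) \<longlonglongrightarrow> yUS k $$ (i,j)" using i j unfolding yUS_def by simp
    qed
    have cVS: "mconv (\<lambda>m. gVS (xs m) k) (yVS k) n rS" if k: "k < L" for k
      unfolding mconv_def
    proof (intro conjI allI impI)
      show "yVS k \<in> carrier_mat n rS" unfolding yVS_def by simp
      fix m show "gVS (xs m) k \<in> carrier_mat n rS" using xsG[of m] k unfolding G_feas_alt by auto
    next
      fix i j assume i: "i < n" and j: "j < rS"
      have "(\<lambda>m. coord (xs m) (3,k,i,j)) \<longlonglongrightarrow> lm 3 k i j" using k i j by (intro lmc) (auto simp: N_def)
      moreover have "coord (xs m) (3,k,i,j) = gVS (xs m) k $$ (i,j)" for m
      proof -
        have "gVS (xs m) k \<in> carrier_mat (dim_row (gVS (xs m) k)) (dim_col (gVS (xs m) k))" by auto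
        have "dim_row (gVS (xs m) k) > i \<and> dim_col (gVS (xs m) k) > j" using xsG[of m] k i j unfolding G_feas_alt by auto
        then show ?thesis unfolding coord_def ent_def using k by simp
      qed
      ultimately show "(\<lambda>m. gVS (xs m) k $$ (i,j)) \<longlonglongrightarrow> yVS k $$ (i,j)" using i j unfolding yVS_def by simp
    qed
    have cB: "mconv (\<lambda>m. gUB (xs m) k * transpose_mat (gVB (xs m) k) * masked_Y nj CY Y k)
                    (yUB k * transpose_mat (yVB k) * masked_Y nj CY Y k) p n" if k: "k < K" for k
      using mconv_mult[OF mconv_mult[OF cUB[OF k] mconv_transpose[OF cVB[OF k]]] mconv_const[OF masked_Y_carrier[OF Y]]] .
    have cS: "mconv (\<lambda>m. gUS (xs m) l * transpose_mat (gVS (xs m) l)) (yUS l * transpose_mat (yVS l)) p n"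
      if l: "l < L" for l
      using mconv_mult[OF cUS[OF l] mconv_transpose[OF cVS[OF l]]] .
    have cR: "mconv (\<lambda>m. residual X K (masked_Y nj CY Y) (\<lambda>k. gUB (xs m) k * transpose_mat (gVB (xs m) k))
                    L (\<lambda>l. gUS (xs m) l * transpose_mat (gVS (xs m) l)))
               (residual X K (masked_Y nj CY Y) (\<lambda>k. yUB k * transpose_mat (yVB k))
                    L (\<lambda>l. yUS l * transpose_mat (yVS l))) p n"
      by (rule mconv_residual[OF X]) (use cB cS in auto)
    have lim: "(\<lambda>m. ?Go (xs m)) \<longlonglongrightarrow> ?Go y"
      unfolding G_obj_alt gy
      by (intro tendsto_mult tendsto_const tendsto_add tendsto_sum mconv_fro2[OF cR]
                mconv_fro2[OF cUB] mconv_fro2[OF cVB] mconv_fro2[OF cUS] mconv_fro2[OF cVS]) auto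
    have yG: "y \<in> ?GF"
      unfolding G_feas_alt gy
    proof (intro conjI allI impI)
      fix k assume k: "k < K"
      show "yUB k \<in> carrier_mat p rB" unfolding yUB_def by (rule mat_carrier)
      show "yVB k \<in> carrier_mat q rB" unfolding yVB_def by (rule mat_carrier)
    next
      fix l assume l: "l < L"
      show "yUS l \<in> carrier_mat p rS" unfolding yUS_def by (rule mat_carrier)
      show "yVS l \<in> carrier_mat n rS" unfolding yVS_def by (rule mat_carrier)
      have "\<forall>m. gUS (xs m) l * transpose_mat (gVS (xs m) l) \<in> Sset nj CS p n l"
      proof
        fix m show "gUS (xs m) l * transpose_mat (gVS (xs m) l) \<in> Sset nj CS p n l"
          using xsG[of m] l unfolding G_feas_alt by blast
      qed
      then show "yUS l * transpose_mat (yVS l) \<in> Sset nj CS p n l"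
        by (rule Sset_limit[OF _ cS[OF l]])
    qed
    have "?Go y \<le> G0" using LIMSEQ_le_const2[OF lim] xsle by blast
    then have "y \<in> S" using yG unfolding S_def by simp
    then show "\<exists>y\<in>S. (\<lambda>m. ?Go (xs m)) \<longlonglongrightarrow> ?Go y" using lim by blast
  qed
  then obtain y where yS: "y \<in> S" and ymin: "\<forall>x\<in>S. ?Go y \<le> ?Go x" by blast
  have "\<forall>z'\<in>?GF. ?Go y \<le> ?Go z'"
  proof
    fix z' assume z': "z' \<in> ?GF"
    show "?Go y \<le> ?Go z'"
    proof (cases "?Go z' \<le> G0")
      case True
      then have "z' \<in> S" unfolding S_def using z' by blast
      then show ?thesis using ymin by blast
    next
      case False
      have "z0 \<in> S" unfolding S_def G0_def using z0 by (simp only: mem_Collect_eq order_refl simp_thms)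
      then have "?Go y \<le> G0" using ymin unfolding G0_def by auto
      then show ?thesis using False by simp
    qed
  qed
  then show ?thesis using yS unfolding S_def by blast
qed

lemma F_obj_alt:
  "F_obj nj CY X Y K L lamB lamS (B, S) =
     1/2 * fro2 (residual X K (masked_Y nj CY Y) B L S)
     + (\<Sum>k<K. lamB k * nuclear_norm (B k)) + (\<Sum>l<L. lamS l * nuclear_norm (S l))"
  by (simp add: F_obj_def frob_sq)

lemma residual_cong:
  assumes "\<forall>k<K. B k = B' k" "\<forall>l<L. S l = S' l"
  shows "residual X K Yk B L S = residual X K Yk B' L S'"
proof -
  have "(\<Sum>k<K. (B k * Yk k) $$ ic) = (\<Sum>k<K. (B' k * Yk k) $$ ic)" for ic
    using assms by (intro sum.cong) auto
  moreover have "(\<Sum>l<L. S l $$ ic) = (\<Sum>l<L. S' l $$ ic)" for ic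
    using assms by (intro sum.cong) auto
  ultimately show ?thesis unfolding residual_def by simp
qed

lemma F_cong:
  assumes "\<forall>k<K. B k = B' k" "\<forall>l<L. S l = S' l"
  shows "F_obj nj CY X Y K L lamB lamS (B, S) = F_obj nj CY X Y K L lamB lamS (B', S')"
  unfolding F_obj_alt residual_cong[OF assms] using assms by (auto intro!: sum.cong)

lemma G_to_F:
  assumes lB: "\<forall>k<K. lamB k > 0" and lS: "\<forall>l<L. lamS l > 0"
    and z: "z \<in> G_feas nj CS p q n rB rS K L"
  defines "w \<equiv> ((\<lambda>k. gUB z k * transpose_mat (gVB z k)), (\<lambda>l. gUS z l * transpose_mat (gVS z l)))"
  shows "w \<in> F_feas nj CS p q n K L \<and> F_obj nj CY X Y K L lamB lamS w \<le> G_obj nj CY X Y K L lamB lamS z"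
proof
  have zf: "\<forall>k<K. gUB z k \<in> carrier_mat p rB \<and> gVB z k \<in> carrier_mat q rB"
    "\<forall>l<L. gUS z l \<in> carrier_mat p rS \<and> gVS z l \<in> carrier_mat n rS \<and>
            gUS z l * transpose_mat (gVS z l) \<in> Sset nj CS p n l"
    using z unfolding G_feas_alt by auto
  show "w \<in> F_feas nj CS p q n K L" unfolding w_def F_feas_def using zf by auto
  have nB: "lamB k * nuclear_norm (gUB z k * transpose_mat (gVB z k)) \<le> lamB k * ((fro2 (gUB z k) + fro2 (gVB z k)) / 2)"
    if k: "k < K" for k
  proof -
    have "gUB z k * transpose_mat (gVB z k) \<in> carrier_mat p q" using zf k by auto
    then have "nuclear_norm (gUB z k * transpose_mat (gVB z k)) \<le> (fro2 (gUB z k) + fro2 (gVB z k)) / 2"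
      using NN_le zf k by blast
    then show ?thesis using lB k by (simp add: mult_left_mono)
  qed
  have nS: "lamS l * nuclear_norm (gUS z l * transpose_mat (gVS z l)) \<le> lamS l * ((fro2 (gUS z l) + fro2 (gVS z l)) / 2)"
    if l: "l < L" for l
  proof -
    have "gUS z l * transpose_mat (gVS z l) \<in> carrier_mat p n" using zf l by auto
    then have "nuclear_norm (gUS z l * transpose_mat (gVS z l)) \<le> (fro2 (gUS z l) + fro2 (gVS z l)) / 2"
      using NN_le zf l by blast
    then show ?thesis using lS l by (simp add: mult_left_mono)
  qed
  have sB: "(\<Sum>k<K. lamB k * nuclear_norm (gUB z k * transpose_mat (gVB z k)))
         \<le> (\<Sum>k<K. lamB k * (fro2 (gUB z k) + fro2 (gVB z k))) / 2"
    unfolding sum_divide_distrib by (rule sum_mono) (use nB in auto)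
  have sS: "(\<Sum>l<L. lamS l * nuclear_norm (gUS z l * transpose_mat (gVS z l)))
         \<le> (\<Sum>l<L. lamS l * (fro2 (gUS z l) + fro2 (gVS z l))) / 2"
    unfolding sum_divide_distrib by (rule sum_mono) (use nS in auto)
  show "F_obj nj CY X Y K L lamB lamS w \<le> G_obj nj CY X Y K L lamB lamS z"
    unfolding w_def F_obj_alt G_obj_alt using sB sS by simp
qed

lemma F_to_G:
  assumes B: "\<forall>k<K. B k \<in> carrier_mat p q" and S: "\<forall>l<L. S l \<in> Sset nj CS p n l"
    and rB: "min p q \<le> rB" and rS: "min p n \<le> rS"
  shows "\<exists>z\<in>G_feas nj CS p q n rB rS K L. (\<forall>k<K. B k = gUB z k * transpose_mat (gVB z k)) \<and>
           (\<forall>l<L. S l = gUS z l * transpose_mat (gVS z l)) \<and>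
           G_obj nj CY X Y K L lamB lamS z = F_obj nj CY X Y K L lamB lamS (B, S)"
proof -
  have "\<forall>k. \<exists>WZ. k < K \<longrightarrow> (fst WZ \<in> carrier_mat p rB \<and> snd WZ \<in> carrier_mat q rB \<and>
          B k = fst WZ * transpose_mat (snd WZ) \<and> (fro2 (fst WZ) + fro2 (snd WZ)) / 2 = nuclear_norm (B k))"
  proof
    fix k show "\<exists>WZ. k < K \<longrightarrow> (fst WZ \<in> carrier_mat p rB \<and> snd WZ \<in> carrier_mat q rB \<and>
          B k = fst WZ * transpose_mat (snd WZ) \<and> (fro2 (fst WZ) + fro2 (snd WZ)) / 2 = nuclear_norm (B k))"
    proof (cases "k < K")
      case True
      then obtain W Z where "W \<in> carrier_mat p rB" "Z \<in> carrier_mat q rB" "B k = W * transpose_mat Z"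
        "(fro2 W + fro2 Z) / 2 = nuclear_norm (B k)" using NN_fact[of "B k" p q rB] B rB by blast
      then show ?thesis by (intro exI[of _ "(W, Z)"]) auto
    qed simp
  qed
  then have "\<exists>f. \<forall>k. k < K \<longrightarrow> (fst (f k) \<in> carrier_mat p rB \<and> snd (f k) \<in> carrier_mat q rB \<and>
          B k = fst (f k) * transpose_mat (snd (f k)) \<and> (fro2 (fst (f k)) + fro2 (snd (f k))) / 2 = nuclear_norm (B k))"
    by (rule choice)
  then obtain fB where fB: "\<forall>k<K. fst (fB k) \<in> carrier_mat p rB \<and> snd (fB k) \<in> carrier_mat q rB \<and>
          B k = fst (fB k) * transpose_mat (snd (fB k)) \<and> (fro2 (fst (fB k)) + fro2 (snd (fB k))) / 2 = nuclear_norm (B k)"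
    by blast
  have "\<forall>l. \<exists>WZ. l < L \<longrightarrow> (fst WZ \<in> carrier_mat p rS \<and> snd WZ \<in> carrier_mat n rS \<and>
          S l = fst WZ * transpose_mat (snd WZ) \<and> (fro2 (fst WZ) + fro2 (snd WZ)) / 2 = nuclear_norm (S l))"
  proof
    fix l show "\<exists>WZ. l < L \<longrightarrow> (fst WZ \<in> carrier_mat p rS \<and> snd WZ \<in> carrier_mat n rS \<and>
          S l = fst WZ * transpose_mat (snd WZ) \<and> (fro2 (fst WZ) + fro2 (snd WZ)) / 2 = nuclear_norm (S l))"
    proof (cases "l < L")
      case True
      then have "S l \<in> carrier_mat p n" using S unfolding Sset_def by auto
      then obtain W Z where "W \<in> carrier_mat p rS" "Z \<in> carrier_mat n rS" "S l = W * transpose_mat Z"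
        "(fro2 W + fro2 Z) / 2 = nuclear_norm (S l)" using NN_fact[of "S l" p n rS] rS by blast
      then show ?thesis by (intro exI[of _ "(W, Z)"]) auto
    qed simp
  qed
  then have "\<exists>f. \<forall>l. l < L \<longrightarrow> (fst (f l) \<in> carrier_mat p rS \<and> snd (f l) \<in> carrier_mat n rS \<and>
          S l = fst (f l) * transpose_mat (snd (f l)) \<and> (fro2 (fst (f l)) + fro2 (snd (f l))) / 2 = nuclear_norm (S l))"
    by (rule choice)
  then obtain fS where fS: "\<forall>l<L. fst (fS l) \<in> carrier_mat p rS \<and> snd (fS l) \<in> carrier_mat n rS \<and>
          S l = fst (fS l) * transpose_mat (snd (fS l)) \<and> (fro2 (fst (fS l)) + fro2 (snd (fS l))) / 2 = nuclear_norm (S l)"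
    by blast
  define z where "z = ((\<lambda>k. fst (fB k)), (\<lambda>k. snd (fB k)), (\<lambda>l. fst (fS l)), (\<lambda>l. snd (fS l)))"
  have gz: "gUB z = (\<lambda>k. fst (fB k))" "gVB z = (\<lambda>k. snd (fB k))" "gUS z = (\<lambda>l. fst (fS l))" "gVS z = (\<lambda>l. snd (fS l))"
    unfolding z_def gUB_def gVB_def gUS_def gVS_def by auto
  have zG: "z \<in> G_feas nj CS p q n rB rS K L" unfolding G_feas_alt gz
  proof (intro conjI allI impI)
    fix k assume k: "k < K"
    show "fst (fB k) \<in> carrier_mat p rB" "snd (fB k) \<in> carrier_mat q rB" using fB k by blast+
  next
    fix l assume l: "l < L"
    show "fst (fS l) \<in> carrier_mat p rS" "snd (fS l) \<in> carrier_mat n rS" using fS l by blast+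
    have "S l = fst (fS l) * transpose_mat (snd (fS l))" using fS l by blast
    then show "fst (fS l) * transpose_mat (snd (fS l)) \<in> Sset nj CS p n l" using S l by metis
  qed
  have eB: "\<forall>k<K. B k = gUB z k * transpose_mat (gVB z k)" unfolding gz using fB by blast
  have eS: "\<forall>l<L. S l = gUS z l * transpose_mat (gVS z l)" unfolding gz using fS by blast
  have r: "residual X K (masked_Y nj CY Y) (\<lambda>k. gUB z k * transpose_mat (gVB z k)) L (\<lambda>l. gUS z l * transpose_mat (gVS z l))
         = residual X K (masked_Y nj CY Y) B L S"
    by (rule residual_cong) (use eB eS in auto)
  have sB: "(\<Sum>k<K. lamB k * (fro2 (gUB z k) + fro2 (gVB z k))) = 2 * (\<Sum>k<K. lamB k * nuclear_norm (B k))"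
    unfolding sum_distrib_left by (intro sum.cong refl) (use fB in \<open>auto simp: gz\<close>)
  have sS: "(\<Sum>l<L. lamS l * (fro2 (gUS z l) + fro2 (gVS z l))) = 2 * (\<Sum>l<L. lamS l * nuclear_norm (S l))"
    unfolding sum_distrib_left by (intro sum.cong refl) (use fS in \<open>auto simp: gz\<close>)
  have "G_obj nj CY X Y K L lamB lamS z = F_obj nj CY X Y K L lamB lamS (B, S)"
    unfolding G_obj_alt F_obj_alt r sB sS by simp
  then show ?thesis using zG eB eS by blast
qed

theorem theorem1:
  fixes p q n J K L rB rS :: nat
    and nj :: "nat \<Rightarrow> nat"
    and X Y :: "real mat"
    and CY CS :: "nat \<Rightarrow> nat \<Rightarrow> bool"
    and lamB lamS :: "nat \<Rightarrow> real"
  assumes "J \<ge> 1" and "p > 0" and "q > 0"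
    and "\<forall>j<J. nj j > 0"
    and "n = (\<Sum>j<J. nj j)"
    and "X \<in> carrier_mat p n" and "Y \<in> carrier_mat q n"
    and "\<forall>k<K. lamB k > 0" and "\<forall>l<L. lamS l > 0"
    and "rB \<ge> min p q" and "rS \<ge> min p n"
  shows "(\<exists>BS. is_arg_min (F_obj nj CY X Y K L lamB lamS) (\<lambda>z. z \<in> F_feas nj CS p q n K L) BS)
       \<and> (\<exists>UV. is_arg_min (G_obj nj CY X Y K L lamB lamS) (\<lambda>z. z \<in> G_feas nj CS p q n rB rS K L) UV)
       \<and> Inf (F_obj nj CY X Y K L lamB lamS ` F_feas nj CS p q n K L)
           = Inf (G_obj nj CY X Y K L lamB lamS ` G_feas nj CS p q n rB rS K L)
       \<and> (\<forall>B S. (B, S) \<in> F_feas nj CS p q n K L \<longrightarrow>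
            (is_arg_min (F_obj nj CY X Y K L lamB lamS) (\<lambda>z. z \<in> F_feas nj CS p q n K L) (B, S)
             \<longleftrightarrow> (\<exists>UB VB US VS.
                   is_arg_min (G_obj nj CY X Y K L lamB lamS)
                     (\<lambda>z. z \<in> G_feas nj CS p q n rB rS K L) (UB, VB, US, VS)
                   \<and> (\<forall>k<K. B k = UB k * transpose_mat (VB k))
                   \<and> (\<forall>l<L. S l = US l * transpose_mat (VS l)))))"
proof -
  note X = assms(6) and Y = assms(7) and lB = assms(8) and lS = assms(9) and rB = assms(10) and rS = assms(11)
  let ?F = "F_obj nj CY X Y K L lamB lamS"
  let ?FF = "F_feas nj CS p q n K L"
  let ?G = "G_obj nj CY X Y K L lamB lamS"
  let ?GF = "G_feas nj CS p q n rB rS K L"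
  obtain zs where zs: "zs \<in> ?GF" and zmin: "\<forall>z'\<in>?GF. ?G zs \<le> ?G z'"
    using G_min_exists[OF lB lS X Y] by blast
  define m where "m = ?G zs"
  have FtoG: "\<exists>z\<in>?GF. (\<forall>k<K. B k = gUB z k * transpose_mat (gVB z k)) \<and>
           (\<forall>l<L. S l = gUS z l * transpose_mat (gVS z l)) \<and> ?G z = ?F (B, S)" if "(B, S) \<in> ?FF" for B S
    using F_to_G[of K B p q L S nj CS n rB rS] that rB rS unfolding F_feas_def by auto
  have Fge: "m \<le> ?F w" if wF: "w \<in> ?FF" for w
  proof -
    obtain B S where w: "w = (B, S)" by (cases w)
    have "(B, S) \<in> ?FF" using wF w by simp
    then obtain z where "z \<in> ?GF" "?G z = ?F (B, S)" using FtoG[of B S] by blast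
    then show ?thesis using zmin w unfolding m_def by metis
  qed
  define ws where "ws = ((\<lambda>k. gUB zs k * transpose_mat (gVB zs k)), (\<lambda>l. gUS zs l * transpose_mat (gVS zs l)))"
  have ws: "ws \<in> ?FF" and wsle: "?F ws \<le> m" using G_to_F[OF lB lS zs] unfolding ws_def m_def by auto
  have Fws: "?F ws = m" using Fge[OF ws] wsle by simp
  have Fmin: "is_arg_min ?F (\<lambda>z. z \<in> ?FF) ws"
    unfolding is_arg_min_linorder using ws Fws Fge by auto
  have Gmin: "is_arg_min ?G (\<lambda>z. z \<in> ?GF) zs"
    unfolding is_arg_min_linorder using zs zmin by auto
  have InfF: "Inf (?F ` ?FF) = m"
    by (rule cInf_eq_minimum) (use ws Fws Fge in auto)
  have InfG: "Inf (?G ` ?GF) = m"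
    by (rule cInf_eq_minimum) (use zs zmin in \<open>auto simp: m_def\<close>)
  have equiv: "is_arg_min ?F (\<lambda>z. z \<in> ?FF) (B, S) \<longleftrightarrow> (\<exists>UB VB US VS.
                   is_arg_min ?G (\<lambda>z. z \<in> ?GF) (UB, VB, US, VS)
                   \<and> (\<forall>k<K. B k = UB k * transpose_mat (VB k))
                   \<and> (\<forall>l<L. S l = US l * transpose_mat (VS l)))"
    if BS: "(B, S) \<in> ?FF" for B S
  proof
    assume am: "is_arg_min ?F (\<lambda>z. z \<in> ?FF) (B, S)"
    then have "\<forall>y. y \<in> ?FF \<longrightarrow> ?F (B, S) \<le> ?F y" unfolding is_arg_min_linorder by blast
    then have "?F (B, S) \<le> ?F ws" using ws by blast
    then have FBS: "?F (B, S) = m" using Fws Fge[OF BS] by simp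
    obtain z where z: "z \<in> ?GF" and eB: "\<forall>k<K. B k = gUB z k * transpose_mat (gVB z k)"
      and eS: "\<forall>l<L. S l = gUS z l * transpose_mat (gVS z l)" and Gz: "?G z = ?F (B, S)"
      using FtoG[OF BS] by blast
    obtain UB VB US VS where zq: "z = (UB, VB, US, VS)" by (cases z) auto
    have gz: "gUB z = UB" "gVB z = VB" "gUS z = US" "gVS z = VS"
      unfolding zq gUB_def gVB_def gUS_def gVS_def by auto
    have "is_arg_min ?G (\<lambda>z. z \<in> ?GF) z"
      unfolding is_arg_min_linorder using z Gz FBS zmin unfolding m_def by auto
    then have am2: "is_arg_min ?G (\<lambda>z. z \<in> ?GF) (UB, VB, US, VS)" unfolding zq .
    have eB2: "\<forall>k<K. B k = UB k * transpose_mat (VB k)" using eB unfolding gz .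
    have eS2: "\<forall>l<L. S l = US l * transpose_mat (VS l)" using eS unfolding gz .
    show "\<exists>UB VB US VS. is_arg_min ?G (\<lambda>z. z \<in> ?GF) (UB, VB, US, VS)
                   \<and> (\<forall>k<K. B k = UB k * transpose_mat (VB k))
                   \<and> (\<forall>l<L. S l = US l * transpose_mat (VS l))"
      using am2 eB2 eS2 by blast
  next
    assume "\<exists>UB VB US VS. is_arg_min ?G (\<lambda>z. z \<in> ?GF) (UB, VB, US, VS)
                   \<and> (\<forall>k<K. B k = UB k * transpose_mat (VB k))
                   \<and> (\<forall>l<L. S l = US l * transpose_mat (VS l))"
    then obtain UB VB US VS where am: "is_arg_min ?G (\<lambda>z. z \<in> ?GF) (UB, VB, US, VS)"
      and eB: "\<forall>k<K. B k = UB k * transpose_mat (VB k)" and eS: "\<forall>l<L. S l = US l * transpose_mat (VS l)"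
      by blast
    define z where "z = (UB, VB, US, VS)"
    have gz: "gUB z = UB" "gVB z = VB" "gUS z = US" "gVS z = VS"
      unfolding z_def gUB_def gVB_def gUS_def gVS_def by auto
    have amz: "is_arg_min ?G (\<lambda>z. z \<in> ?GF) z" using am unfolding z_def .
    have z: "z \<in> ?GF" using amz unfolding is_arg_min_linorder by blast
    have "\<forall>y. y \<in> ?GF \<longrightarrow> ?G z \<le> ?G y" using amz unfolding is_arg_min_linorder by blast
    then have "?G z \<le> ?G zs" using zs by blast
    then have Gz: "?G z = m" using zmin z unfolding m_def by force
    have "?F (B, S) = ?F ((\<lambda>k. gUB z k * transpose_mat (gVB z k)), (\<lambda>l. gUS z l * transpose_mat (gVS z l)))"
      by (rule F_cong) (use eB eS gz in auto)
    also have "\<dots> \<le> ?G z" using G_to_F[OF lB lS z] by blast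
    finally have "?F (B, S) \<le> m" using Gz by simp
    then show "is_arg_min ?F (\<lambda>z. z \<in> ?FF) (B, S)"
      unfolding is_arg_min_linorder using BS Fge by (meson order_trans)
  qed
  have c4: "\<forall>B S. (B, S) \<in> ?FF \<longrightarrow>
            (is_arg_min ?F (\<lambda>z. z \<in> ?FF) (B, S)
             \<longleftrightarrow> (\<exists>UB VB US VS.
                   is_arg_min ?G (\<lambda>z. z \<in> ?GF) (UB, VB, US, VS)
                   \<and> (\<forall>k<K. B k = UB k * transpose_mat (VB k))
                   \<and> (\<forall>l<L. S l = US l * transpose_mat (VS l))))"
  proof (intro allI impI)
    fix B S assume "(B, S) \<in> ?FF"
    then show "is_arg_min ?F (\<lambda>z. z \<in> ?FF) (B, S)
             \<longleftrightarrow> (\<exists>UB VB US VS.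
                   is_arg_min ?G (\<lambda>z. z \<in> ?GF) (UB, VB, US, VS)
                   \<and> (\<forall>k<K. B k = UB k * transpose_mat (VB k))
                   \<and> (\<forall>l<L. S l = US l * transpose_mat (VS l)))" by (rule equiv)
  qed
  have c1: "\<exists>BS. is_arg_min ?F (\<lambda>z. z \<in> ?FF) BS" using Fmin by blast
  have c2: "\<exists>UV. is_arg_min ?G (\<lambda>z. z \<in> ?GF) UV" using Gmin by blast
  have c3: "Inf (?F ` ?FF) = Inf (?G ` ?GF)" using InfF InfG by simp
  show ?thesis using c1 c2 c3 c4 by (intro conjI)
qed

end
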